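(* For every $C_\pi$ process $P$, every channel $m$, every prefix $\pi$, and channels $k,l$ and variables $x,y$, we have $$(\nu k)\big((\nu l)\overline{k}\langle l\rangle.m(y).[y=l]\pi.0 \;|\; k(x).P\big)\;\sim\;(\nu k)\big((\nu l)\overline{k}\langle l\rangle.m(y).0 \;|\; k(x).P\big).$$
   Context: The Confidential $\pi$-calculus $C_\pi$. There are two disjoint countable sets: ${\cal V}$ of variables (ranged over by $x,y,z,\dots$) and ${\cal C}$ of channels (ranged over by $k,l,m,n,\dots$). Let ${\cal N}={\cal V}\cup{\cal C}$, ranged over by $a,b,c,\dots$. Prefixes: $\pi ::= \overline{a}\langle k\rangle \mid a(x) \mid [a=b]\pi$. Processes: $P ::= 0 \mid \pi.P \mid P\,|\,P \mid (\nu k)P \mid\, !P$. The object of an output is always a channel, and the bound object of an input is always a variable. In $(\nu k)P$ the channel $k$ is bound, and in $a(x).P$ the variable $x$ is bound, with scope $P$. The sets $\mathrm{fn}(P)$, $\mathrm{bn}(P)$ and $\mathrm{n}(P)$ are the free, bound and all names of $P$. The set $\mathrm{fo}(P)$ consists of the free channels of $P$ that occur as objects of output prefixes in $P$. Processes are identified up to $\alpha$-conversion. Actions: $\alpha ::= \overline{k}\langle l\rangle \mid k(l) \mid (\nu l)\overline{k}\langle l\rangle \mid \tau$, where $k,l$ are channels. We have $\mathrm{fn}(\overline{k}\langle l\rangle)=\mathrm{fn}(k(l))=\{k,l\}$, $\mathrm{fn}((\nu l)\overline{k}\langle l\rangle)=\{k\}$, $\mathrm{bn}((\nu l)\overline{k}\langle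 l\rangle)=\{l\}$, all other bound-name sets are empty, $\mathrm{fn}(\tau)=\emptyset$, and $\mathrm{n}(\alpha)=\mathrm{fn}(\alpha)\cup\mathrm{bn}(\alpha)$. The labelled transition relation $\xrightarrow{\alpha}$ is the least relation closed under the following rules: - (out) $\overline{k}\langle l\rangle.P \xrightarrow{\overline{k}\langle l\rangle} P$. - (in) $k(x).P \xrightarrow{k(l)} P\{l/x\}$ for every channel $l$. - (match) If $\pi.P\xrightarrow{\alpha}P'$, then $[a=a]\pi.P\xrightarrow{\alpha}P'$. - (res) If $P\xrightarrow{\alpha}P'$ and $k\notin \mathrm{n}(\alpha)$, then $(\nu k)P\xrightarrow{\alpha}(\nu k)P'$. - (open) If $P\xrightarrow{\overline{k}\langle l\rangle}Q$ and $k\neq l$, then $(\nu l)P\xrightarrow{(\nu l)\overline{k}\langle l\rangle}Q$. - (par-l) If $P\xrightarrow{\alpha}Q$ and $\mathrm{bn}(\alpha)\cap\mathrm{fn}(R)=\emptyset$, then $P|R\xrightarrow{\alpha}Q|R$. - (comm-l) If $P\xrightarrow{\overline{k}\langle l\rangle}P'$ and $Q\xrightarrow{k(l)}Q'$, then $P|Q\xrightarrow{\tau}P'|Q'$. - (close-l) If $P\xrightarrow{(\nu l)\overline{k}\langle l\rangle}P'$, $Q\xrightarrow{k(l)}Q'$ and $l\notin\mathrm{fn}(Q)$, then $P|Q\xrightarrow{\tau}(\nu l)(P'|Q')$. - The symmetric rules (par-r), (comm-r), (close-r). - (rep-act) If $P\xrightarrow{\alpha}P'$, then $!P\xrightarrow{\alpha}P'|!P$.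 - (rep-comm) If $P\xrightarrow{\overline{k}\langle l\rangle}P'$ and $P\xrightarrow{k(l)}P''$, then $!P\xrightarrow{\tau}(P'|P'')|!P$. - (rep-close) If $P\xrightarrow{(\nu l)\overline{k}\langle l\rangle}P'$, $P\xrightarrow{k(l)}P''$ and $l\notin\mathrm{fn}(P)$, then $!P\xrightarrow{\tau}(\nu l)(P'|P'')|!P$. Strong bisimilarity $\sim$ is the largest symmetric binary relation on processes such that whenever $P\sim Q$ and $P\xrightarrow{\alpha}P'$ with $\mathrm{bn}(\alpha)\cap\mathrm{fn}(Q)=\emptyset$, there exists $Q'$ with $Q\xrightarrow{\alpha}Q'$ and $P'\sim Q'$. *)

theory Defs
  imports Main
begin

section \<open>Syntax of the confidential pi-calculus\<close>

type_synonym var = nat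
type_synonym chan = nat

datatype nm = Var var | Ch chan

text \<open>Prefixes: output (object always a channel), input (bound object always
a variable), and matching.\<close>
datatype prefix = POut nm chan | PIn nm var | PMatch nm nm prefix

datatype proc = PNil | Pre prefix proc | Par proc proc | Res chan proc | Bang proc

fun pnames :: "prefix \<Rightarrow> nm set" where
  "pnames (POut a k) = {a, Ch k}"
| "pnames (PIn a x) = {a}"
| "pnames (PMatch a b p) = {a, b} \<union> pnames p"

fun pbinder :: "prefix \<Rightarrow> var option" where
  "pbinder (POut a k) = None"
| "pbinder (PIn a x) = Some x"
| "pbinder (PMatch a b p) = pbinder p"

fun fn :: "proc \<Rightarrow> nm set" where
  "fn PNil = {}"
| "fn (Pre p P) = pnames p \<union> (case pbinder p of None \<Rightarrow> fn P | Some x \<Rightarrow> fn P - {Var x})"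
| "fn (Par P Q) = fn P \<union> fn Q"
| "fn (Res k P) = fn P - {Ch k}"
| "fn (Bang P) = fn P"

fun bnc :: "proc \<Rightarrow> chan set" where
  "bnc PNil = {}"
| "bnc (Pre p P) = bnc P"
| "bnc (Par P Q) = bnc P \<union> bnc Q"
| "bnc (Res k P) = insert k (bnc P)"
| "bnc (Bang P) = bnc P"

definition swp :: "nat \<Rightarrow> nat \<Rightarrow> nat \<Rightarrow> nat" where
  "swp a b c = (if c = a then b else if c = b then a else c)"

fun swapc_nm :: "chan \<Rightarrow> chan \<Rightarrow> nm \<Rightarrow> nm" where
  "swapc_nm k l (Ch c) = Ch (swp k l c)"
| "swapc_nm k l (Var x) = Var x"

fun swapc_pre :: "chan \<Rightarrow> chan \<Rightarrow> prefix \<Rightarrow> prefix" where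
  "swapc_pre k l (POut a c) = POut (swapc_nm k l a) (swp k l c)"
| "swapc_pre k l (PIn a x) = PIn (swapc_nm k l a) x"
| "swapc_pre k l (PMatch a b p) = PMatch (swapc_nm k l a) (swapc_nm k l b) (swapc_pre k l p)"

fun swapc :: "chan \<Rightarrow> chan \<Rightarrow> proc \<Rightarrow> proc" where
  "swapc k l PNil = PNil"
| "swapc k l (Pre p P) = Pre (swapc_pre k l p) (swapc k l P)"
| "swapc k l (Par P Q) = Par (swapc k l P) (swapc k l Q)"
| "swapc k l (Res c P) = Res (swp k l c) (swapc k l P)"
| "swapc k l (Bang P) = Bang (swapc k l P)"

fun swapv_nm :: "var \<Rightarrow> var \<Rightarrow> nm \<Rightarrow> nm" where
  "swapv_nm x y (Var z) = Var (swp x y z)"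
| "swapv_nm x y (Ch c) = Ch c"

fun swapv_pre :: "var \<Rightarrow> var \<Rightarrow> prefix \<Rightarrow> prefix" where
  "swapv_pre x y (POut a c) = POut (swapv_nm x y a) c"
| "swapv_pre x y (PIn a z) = PIn (swapv_nm x y a) (swp x y z)"
| "swapv_pre x y (PMatch a b p) = PMatch (swapv_nm x y a) (swapv_nm x y b) (swapv_pre x y p)"

fun swapv :: "var \<Rightarrow> var \<Rightarrow> proc \<Rightarrow> proc" where
  "swapv x y PNil = PNil"
| "swapv x y (Pre p P) = Pre (swapv_pre x y p) (swapv x y P)"
| "swapv x y (Par P Q) = Par (swapv x y P) (swapv x y Q)"
| "swapv x y (Res c P) = Res c (swapv x y P)"
| "swapv x y (Bang P) = Bang (swapv x y P)"

fun rebind :: "var \<Rightarrow> prefix \<Rightarrow> prefix" where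
  "rebind y (POut a c) = POut a c"
| "rebind y (PIn a x) = PIn a y"
| "rebind y (PMatch a b p) = PMatch a b (rebind y p)"

text \<open>Substitution of a channel for the free occurrences of a variable.  It is
only used (in rule (in)) when the channel is not bound by a restriction in the
process, so that it is capture-avoiding there.\<close>
fun subst_nm :: "var \<Rightarrow> chan \<Rightarrow> nm \<Rightarrow> nm" where
  "subst_nm x l (Var z) = (if z = x then Ch l else Var z)"
| "subst_nm x l (Ch c) = Ch c"

fun subst_pre :: "var \<Rightarrow> chan \<Rightarrow> prefix \<Rightarrow> prefix" where
  "subst_pre x l (POut a c) = POut (subst_nm x l a) c"
| "subst_pre x l (PIn a z) = PIn (subst_nm x l a) z"
| "subst_pre x l (PMatch a b p) = PMatch (subst_nm x l a) (subst_nm x l b) (subst_pre x l p)"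

fun subst :: "var \<Rightarrow> chan \<Rightarrow> proc \<Rightarrow> proc" where
  "subst x l PNil = PNil"
| "subst x l (Pre p P) = Pre (subst_pre x l p) (if pbinder p = Some x then P else subst x l P)"
| "subst x l (Par P Q) = Par (subst x l P) (subst x l Q)"
| "subst x l (Res c P) = Res c (subst x l P)"
| "subst x l (Bang P) = Bang (subst x l P)"

inductive alpha :: "proc \<Rightarrow> proc \<Rightarrow> bool" where
  a_refl: "alpha P P"
| a_sym: "alpha P Q \<Longrightarrow> alpha Q P"
| a_trans: "alpha P Q \<Longrightarrow> alpha Q R \<Longrightarrow> alpha P R"
| a_res_rename: "Ch l \<notin> fn P \<Longrightarrow> alpha (Res k P) (Res l (swapc k l P))"
| a_in_rename: "pbinder p = Some x \<Longrightarrow> Var y \<notin> fn P \<Longrightarrow>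
     alpha (Pre p P) (Pre (rebind y p) (swapv x y P))"
| a_pre: "alpha P Q \<Longrightarrow> alpha (Pre p P) (Pre p Q)"
| a_par: "alpha P P' \<Longrightarrow> alpha Q Q' \<Longrightarrow> alpha (Par P Q) (Par P' Q')"
| a_res: "alpha P Q \<Longrightarrow> alpha (Res k P) (Res k Q)"
| a_bang: "alpha P Q \<Longrightarrow> alpha (Bang P) (Bang Q)"

datatype act = AOut chan chan | AIn chan chan | ABOut chan chan | ATau
  \<comment> \<open>\<open>ABOut k l\<close> is the bound output \<open>(\<nu>l) k<l>\<close>\<close>

fun afn :: "act \<Rightarrow> nm set" where
  "afn (AOut k l) = {Ch k, Ch l}"
| "afn (AIn k l) = {Ch k, Ch l}"
| "afn (ABOut k l) = {Ch k}"
| "afn ATau = {}"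

fun abn :: "act \<Rightarrow> nm set" where
  "abn (ABOut k l) = {Ch l}"
| "abn _ = {}"

definition an :: "act \<Rightarrow> nm set" where
  "an a = afn a \<union> abn a"

text \<open>The transition relation; processes are identified up to alpha-conversion,
which is captured by rule \<open>s_alpha\<close>.\<close>
inductive step :: "proc \<Rightarrow> act \<Rightarrow> proc \<Rightarrow> bool" where
  s_out: "step (Pre (POut (Ch k) l) P) (AOut k l) P"
| s_in: "l \<notin> bnc P \<Longrightarrow> step (Pre (PIn (Ch k) x) P) (AIn k l) (subst x l P)"
| s_match: "step (Pre p P) a P' \<Longrightarrow> step (Pre (PMatch c c p) P) a P'"
| s_res: "step P a P' \<Longrightarrow> Ch k \<notin> an a \<Longrightarrow> step (Res k P) a (Res k P')"
| s_open: "step P (AOut k l) Q \<Longrightarrow> k \<noteq> l \<Longrightarrow> step (Res l P) (ABOut k l) Q"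
| s_par_l: "step P a Q \<Longrightarrow> abn a \<inter> fn R = {} \<Longrightarrow> step (Par P R) a (Par Q R)"
| s_par_r: "step P a Q \<Longrightarrow> abn a \<inter> fn R = {} \<Longrightarrow> step (Par R P) a (Par R Q)"
| s_comm_l: "step P (AOut k l) P' \<Longrightarrow> step Q (AIn k l) Q' \<Longrightarrow> step (Par P Q) ATau (Par P' Q')"
| s_comm_r: "step P (AOut k l) P' \<Longrightarrow> step Q (AIn k l) Q' \<Longrightarrow> step (Par Q P) ATau (Par Q' P')"
| s_close_l: "step P (ABOut k l) P' \<Longrightarrow> step Q (AIn k l) Q' \<Longrightarrow> Ch l \<notin> fn Q \<Longrightarrow>
     step (Par P Q) ATau (Res l (Par P' Q'))"
| s_close_r: "step P (ABOut k l) P' \<Longrightarrow> step Q (AIn k l) Q' \<Longrightarrow> Ch l \<notin> fn Q \<Longrightarrow>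
     step (Par Q P) ATau (Res l (Par Q' P'))"
| s_rep_act: "step P a P' \<Longrightarrow> step (Bang P) a (Par P' (Bang P))"
| s_rep_comm: "step P (AOut k l) P' \<Longrightarrow> step P (AIn k l) P'' \<Longrightarrow>
     step (Bang P) ATau (Par (Par P' P'') (Bang P))"
| s_rep_close: "step P (ABOut k l) P' \<Longrightarrow> step P (AIn k l) P'' \<Longrightarrow> Ch l \<notin> fn P \<Longrightarrow>
     step (Bang P) ATau (Par (Res l (Par P' P'')) (Bang P))"
| s_alpha: "alpha P P' \<Longrightarrow> step P' a Q \<Longrightarrow> step P a Q"

definition is_bisim :: "(proc \<times> proc) set \<Rightarrow> bool" where
  "is_bisim R \<longleftrightarrow> sym R \<and>
     (\<forall>P Q. (P, Q) \<in> R \<longrightarrow> (\<forall>a P'. step P a P' \<and> abn a \<inter> fn Q = {} \<longrightarrow>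
        (\<exists>Q'. step Q a Q' \<and> (P', Q') \<in> R)))"

definition bisimilar :: "proc \<Rightarrow> proc \<Rightarrow> bool" (infix "\<sim>\<^sub>s" 50) where
  "P \<sim>\<^sub>s Q \<longleftrightarrow> (\<exists>R. is_bisim R \<and> (P, Q) \<in> R)"

end

theory Submission
  imports Defs
begin


lemma swp_simps[simp]:
  "swp a b (swp a b c) = c" "swp a b a = b" "swp a b b = a" "swp a a c = c"
  "(swp a b c = swp a b d) = (c = d)"
  by (auto simp: swp_def)

lemma swp_other[simp]: "c \<noteq> a \<Longrightarrow> c \<noteq> b \<Longrightarrow> swp a b c = c"
  by (auto simp: swp_def)

lemma swp_sym: "swp a b = swp b a"
  by (auto simp: swp_def fun_eq_iff)

lemma swp_swp: "swp a b (swp c d e) = swp (swp a b c) (swp a b d) (swp a b e)"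
  by (auto simp: swp_def)

lemma swp_eq_iff: "(swp a b c = d) = (c = swp a b d)"
  by (auto simp: swp_def)

lemma swapc_nm_inv[simp]: "swapc_nm a b (swapc_nm a b n) = n"
  by (cases n) auto
lemma swapc_pre_inv[simp]: "swapc_pre a b (swapc_pre a b p) = p"
  by (induction p) auto
lemma swapc_inv[simp]: "swapc a b (swapc a b P) = P"
  by (induction P) auto

lemma swapc_nm_id[simp]: "swapc_nm a a n = n"
  by (cases n) auto
lemma swapc_pre_id[simp]: "swapc_pre a a p = p"
  by (induction p) auto
lemma swapc_id[simp]: "swapc a a P = P"
  by (induction P) auto

lemma swapc_nm_sym: "swapc_nm a b n = swapc_nm b a n"
  by (cases n) (auto simp: swp_def)
lemma swapc_pre_sym: "swapc_pre a b p = swapc_pre b a p"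
  by (induction p) (auto simp: swapc_nm_sym swp_sym)
lemma swapc_sym: "swapc a b P = swapc b a P"
  by (induction P) (auto simp: swapc_pre_sym swp_sym)

lemma swapc_nm_inj[simp]: "(swapc_nm a b n = swapc_nm a b n') = (n = n')"
  by (metis swapc_nm_inv)

lemma swapc_nm_Var[simp]: "(swapc_nm a b n = Var x) = (n = Var x)"
  by (cases n) auto
lemma swapc_nm_Ch: "(swapc_nm a b n = Ch c) = (n = Ch (swp a b c))"
  by (cases n) (auto simp: swp_eq_iff)

lemma swapc_nm_comm: "swapc_nm a b (swapc_nm c d n) = swapc_nm (swp a b c) (swp a b d) (swapc_nm a b n)"
  by (cases n) (simp_all add: swp_swp[of a b c d])
lemma swapc_pre_comm: "swapc_pre a b (swapc_pre c d p) = swapc_pre (swp a b c) (swp a b d) (swapc_pre a b p)"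
  by (induction p) (simp_all add: swp_swp[of a b c d] swapc_nm_comm[of a b c d])
lemma swapc_comm: "swapc a b (swapc c d P) = swapc (swp a b c) (swp a b d) (swapc a b P)"
  by (induction P) (simp_all add: swp_swp[of a b c d] swapc_pre_comm[of a b c d])

lemma pbinder_swapc[simp]: "pbinder (swapc_pre a b p) = pbinder p"
  by (induction p) auto

lemma pnames_swapc: "pnames (swapc_pre a b p) = swapc_nm a b ` pnames p"
  by (induction p) auto

lemma fn_swapc: "fn (swapc a b P) = swapc_nm a b ` fn P"
proof (induction P)
  case (Pre p P)
  show ?case
  proof (cases "pbinder p")
    case None thus ?thesis using Pre by (auto simp: pnames_swapc image_Un)
  next
    case (Some x)
    have "swapc_nm a b ` (fn P - {Var x}) = swapc_nm a b ` fn P - {Var x}"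
      by (subst image_set_diff) (auto simp: inj_on_def)
    thus ?thesis using Pre Some by (auto simp: pnames_swapc)
  qed
next
  case (Res c P)
  have "swapc_nm a b ` (fn P - {Ch c}) = swapc_nm a b ` fn P - {Ch (swp a b c)}"
    by (subst image_set_diff) (auto simp: inj_on_def)
  thus ?case using Res by auto
qed (auto simp: image_Un)

lemma mem_inv_image: "(\<And>x. f (f x) = x) \<Longrightarrow> (y \<in> f ` S) = (f y \<in> S)"
  by (metis image_iff)

lemma mem_fn_swapc: "(n \<in> fn (swapc a b P)) = (swapc_nm a b n \<in> fn P)"
  by (simp add: fn_swapc mem_inv_image)
lemma Ch_fn_swapc: "(Ch c \<in> fn (swapc a b P)) = (Ch (swp a b c) \<in> fn P)"
  by (simp add: mem_fn_swapc)
lemma Var_fn_swapc[simp]: "(Var x \<in> fn (swapc a b P)) = (Var x \<in> fn P)"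
  by (simp add: mem_fn_swapc)

lemma bnc_swapc: "bnc (swapc a b P) = swp a b ` bnc P"
  by (induction P) auto

lemma subst_nm_swapc: "swapc_nm a b (subst_nm x l n) = subst_nm x (swp a b l) (swapc_nm a b n)"
  by (cases n) auto
lemma subst_pre_swapc: "swapc_pre a b (subst_pre x l p) = subst_pre x (swp a b l) (swapc_pre a b p)"
  by (induction p) (auto simp: subst_nm_swapc)
lemma subst_swapc: "swapc a b (subst x l P) = subst x (swp a b l) (swapc a b P)"
  by (induction P) (auto simp: subst_pre_swapc)

lemma swapv_nm_inv[simp]: "swapv_nm x y (swapv_nm x y n) = n"
  by (cases n) auto
lemma swapv_pre_inv[simp]: "swapv_pre x y (swapv_pre x y p) = p"
  by (induction p) auto
lemma swapv_inv[simp]: "swapv x y (swapv x y P) = P"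
  by (induction P) auto

lemma swapv_nm_inj[simp]: "(swapv_nm x y n = swapv_nm x y n') = (n = n')"
  by (metis swapv_nm_inv)

lemma swapcv_nm: "swapc_nm a b (swapv_nm x y n) = swapv_nm x y (swapc_nm a b n)"
  by (cases n) auto
lemma swapcv_pre: "swapc_pre a b (swapv_pre x y p) = swapv_pre x y (swapc_pre a b p)"
  by (induction p) (auto simp: swapcv_nm)
lemma swapcv: "swapc a b (swapv x y P) = swapv x y (swapc a b P)"
  by (induction P) (auto simp: swapcv_pre)

lemma swapc_rebind: "swapc_pre a b (rebind y p) = rebind y (swapc_pre a b p)"
  by (induction p) auto

lemma pbinder_swapv: "pbinder (swapv_pre x y p) = map_option (swp x y) (pbinder p)"
  by (induction p) auto

lemma pnames_swapv: "pnames (swapv_pre x y p) = swapv_nm x y ` pnames p"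
  by (induction p) auto

lemma fn_swapv: "fn (swapv x y P) = swapv_nm x y ` fn P"
proof (induction P)
  case (Pre p P)
  show ?case
  proof (cases "pbinder p")
    case None thus ?thesis using Pre by (auto simp: pnames_swapv image_Un pbinder_swapv)
  next
    case (Some z)
    have "swapv_nm x y ` (fn P - {Var z}) = swapv_nm x y ` fn P - {Var (swp x y z)}"
      by (subst image_set_diff) (auto simp: inj_on_def)
    thus ?thesis using Pre Some by (auto simp: pnames_swapv pbinder_swapv)
  qed
next
  case (Res c P)
  have "swapv_nm x y ` (fn P - {Ch c}) = swapv_nm x y ` fn P - {Ch c}"
    by (subst image_set_diff) (auto simp: inj_on_def)
  thus ?case using Res by auto
qed (auto simp: image_Un)

lemma pnames_rebind[simp]: "pnames (rebind y p) = pnames p"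
  by (induction p) auto
lemma pbinder_rebind: "pbinder p = Some x \<Longrightarrow> pbinder (rebind y p) = Some y"
  by (induction p) auto
lemma pbinder_rebind_None: "pbinder p = None \<Longrightarrow> rebind y p = p"
  by (induction p) auto
lemma rebind_rebind[simp]: "rebind z (rebind y p) = rebind z p"
  by (induction p) auto


lemma mem_fn_swapv: "(n \<in> fn (swapv x y P)) = (swapv_nm x y n \<in> fn P)"
  by (simp add: fn_swapv mem_inv_image)

lemma alpha_fn: "alpha P Q \<Longrightarrow> fn P = fn Q"
proof (induction rule: alpha.induct)
  case (a_res_rename l P k)
  show ?case
  proof (rule set_eqI)
    fix n show "n \<in> fn (Res k P) \<longleftrightarrow> n \<in> fn (Res l (swapc k l P))"
      using a_res_rename by (cases n) (auto simp: mem_fn_swapc swp_def split: if_splits)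
  qed
next
  case (a_in_rename p x y P)
  have "fn (swapv x y P) - {Var y} = fn P - {Var x}"
  proof (rule set_eqI)
    fix n show "n \<in> fn (swapv x y P) - {Var y} \<longleftrightarrow> n \<in> fn P - {Var x}"
      using a_in_rename by (cases n) (auto simp: mem_fn_swapv swp_def split: if_splits)
  qed
  thus ?case using a_in_rename by (simp add: pbinder_rebind)
next
  case (a_pre P Q p) thus ?case by (auto split: option.splits)
qed simp_all

lemma alpha_swapc: "alpha P Q \<Longrightarrow> alpha (swapc a b P) (swapc a b Q)"
proof (induction rule: alpha.induct)
  case (a_res_rename l P k)
  have "alpha (Res (swp a b k) (swapc a b P)) (Res (swp a b l) (swapc (swp a b k) (swp a b l) (swapc a b P)))"
    by (rule alpha.a_res_rename) (use a_res_rename in \<open>simp add: Ch_fn_swapc\<close>)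
  thus ?case by (simp add: swapc_comm[of a b k l])
next
  case (a_in_rename p x y P)
  have "alpha (Pre (swapc_pre a b p) (swapc a b P)) (Pre (rebind y (swapc_pre a b p)) (swapv x y (swapc a b P)))"
    by (rule alpha.a_in_rename) (use a_in_rename in auto)
  thus ?case by (simp add: swapc_rebind swapcv)
next
  case (a_sym P Q) thus ?case by (metis alpha.a_sym)
next
  case (a_trans P Q R) thus ?case by (metis alpha.a_trans)
qed (simp_all add: alpha.a_refl alpha.a_pre alpha.a_par alpha.a_res alpha.a_bang)



lemma finite_pnames: "finite (pnames p)"
  by (induction p) auto
lemma finite_fn: "finite (fn P)"
  by (induction P) (auto simp: finite_pnames split: option.splits)

lemma finite_fnc: "finite {c. Ch c \<in> fn P}"
proof -
  have "{c. Ch c \<in> fn P} \<subseteq> (\<lambda>n. case n of Ch c \<Rightarrow> c | Var x \<Rightarrow> 0) ` fn P"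
    by (force simp: image_iff)
  thus ?thesis using finite_fn finite_surj by blast
qed

lemma finite_bnc: "finite (bnc P)"
  by (induction P) auto

lemma swapc_nm_fresh: "n \<noteq> Ch a \<Longrightarrow> n \<noteq> Ch b \<Longrightarrow> swapc_nm a b n = n"
  by (cases n) auto
lemma swapc_pre_fresh: "Ch a \<notin> pnames p \<Longrightarrow> Ch b \<notin> pnames p \<Longrightarrow> swapc_pre a b p = p"
  by (induction p) (auto simp: swapc_nm_fresh)

lemma alpha_fresh_swap: "Ch a \<notin> fn P \<Longrightarrow> Ch b \<notin> fn P \<Longrightarrow> alpha P (swapc a b P)"
proof (induction P)
  case PNil thus ?case by (simp add: alpha.a_refl)
next
  case (Pre p P)
  have "Ch a \<notin> fn P" "Ch b \<notin> fn P" using Pre.prems by (auto split: option.splits)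
  moreover have "swapc_pre a b p = p" using Pre.prems by (intro swapc_pre_fresh) auto
  ultimately show ?case using Pre.IH by (simp add: alpha.a_pre)
next
  case (Par P Q) thus ?case by (simp add: alpha.a_par)
next
  case (Bang P) thus ?case by (simp add: alpha.a_bang)
next
  case (Res c P)
  show ?case
  proof (cases "a = b")
    case True thus ?thesis by (simp add: alpha.a_refl)
  next
    case ab: False
    show ?thesis
    proof (cases "c = a")
      case True
      have "Ch b \<notin> fn P" using Res.prems ab True by auto
      thus ?thesis using True by (auto intro: alpha.a_res_rename)
    next
      case ca: False
      show ?thesis
      proof (cases "c = b")
        case True
        have "Ch a \<notin> fn P" using Res.prems ab True by auto
        hence "alpha (Res b P) (Res a (swapc b a P))" by (rule alpha.a_res_rename)
        thus ?thesis using True by (simp add: swapc_sym[of b a])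
      next
        case False
        have "Ch a \<notin> fn P" "Ch b \<notin> fn P" using Res.prems ca False by auto
        thus ?thesis using Res.IH ca False by (simp add: alpha.a_res)
      qed
    qed
  qed
qed



definition parrel where "parrel X Y \<longleftrightarrow> (\<forall>P Q. X = Par P Q \<longrightarrow> (\<exists>P' Q'. Y = Par P' Q' \<and> alpha P P' \<and> alpha Q Q'))"

lemma parrel_trans: "parrel X Y \<Longrightarrow> parrel Y Z \<Longrightarrow> parrel X Z"
  unfolding parrel_def
proof (intro allI impI)
  fix P Q assume a: "\<forall>P Q. X = Par P Q \<longrightarrow> (\<exists>P' Q'. Y = Par P' Q' \<and> alpha P P' \<and> alpha Q Q')"
    and b: "\<forall>P Q. Y = Par P Q \<longrightarrow> (\<exists>P' Q'. Z = Par P' Q' \<and> alpha P P' \<and> alpha Q Q')"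
    and c: "X = Par P Q"
  from a c obtain P1 Q1 where 1: "Y = Par P1 Q1" "alpha P P1" "alpha Q Q1" by blast
  from b 1 obtain P2 Q2 where "Z = Par P2 Q2" "alpha P1 P2" "alpha Q1 Q2" by blast
  thus "\<exists>P' Q'. Z = Par P' Q' \<and> alpha P P' \<and> alpha Q Q'" using 1 alpha.a_trans by blast
qed

lemma alpha_parrel: "alpha X Y \<Longrightarrow> parrel X Y \<and> parrel Y X"
proof (induction rule: alpha.induct)
  case (a_trans P Q R) thus ?case using parrel_trans by blast
next
  case (a_sym P Q) thus ?case by blast
next
  case (a_refl P) thus ?case by (simp add: parrel_def alpha.a_refl)
next
  case (a_par P P' Q Q') thus ?case using alpha.a_sym[OF a_par(1)] alpha.a_sym[OF a_par(2)] by (simp add: parrel_def)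
qed (simp_all add: parrel_def)

lemma alpha_ParE: "alpha (Par P Q) Y \<Longrightarrow> (\<And>P' Q'. Y = Par P' Q' \<Longrightarrow> alpha P P' \<Longrightarrow> alpha Q Q' \<Longrightarrow> R) \<Longrightarrow> R"
  using alpha_parrel unfolding parrel_def by blast
lemma alpha_ParE2: "alpha Y (Par P Q) \<Longrightarrow> (\<And>P' Q'. Y = Par P' Q' \<Longrightarrow> alpha P' P \<Longrightarrow> alpha Q' Q \<Longrightarrow> R) \<Longrightarrow> R"
  by (erule alpha_ParE[OF alpha.a_sym]) (auto dest: alpha.a_sym)
lemma alpha_Par_iff: "alpha (Par P Q) (Par P' Q') = (alpha P P' \<and> alpha Q Q')"
  by (auto elim: alpha_ParE intro: alpha.a_par)

definition bangrel where "bangrel X Y \<longleftrightarrow> (\<forall>P. X = Bang P \<longrightarrow> (\<exists>P'. Y = Bang P' \<and> alpha P P'))"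

lemma bangrel_trans: "bangrel X Y \<Longrightarrow> bangrel Y Z \<Longrightarrow> bangrel X Z"
  unfolding bangrel_def
proof (intro allI impI)
  fix P assume a: "\<forall>P. X = Bang P \<longrightarrow> (\<exists>P'. Y = Bang P' \<and> alpha P P')"
    and b: "\<forall>P. Y = Bang P \<longrightarrow> (\<exists>P'. Z = Bang P' \<and> alpha P P')"
    and c: "X = Bang P"
  from a c obtain P1 where 1: "Y = Bang P1" "alpha P P1" by blast
  from b 1 obtain P2 where "Z = Bang P2" "alpha P1 P2" by blast
  thus "\<exists>P'. Z = Bang P' \<and> alpha P P'" using 1 alpha.a_trans by blast
qed

lemma alpha_bangrel: "alpha X Y \<Longrightarrow> bangrel X Y \<and> bangrel Y X"
proof (induction rule: alpha.induct)
  case (a_trans P Q R) thus ?case using bangrel_trans by blast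
next
  case (a_sym P Q) thus ?case by blast
next
  case (a_refl P) thus ?case by (simp add: bangrel_def alpha.a_refl)
next
  case (a_bang P Q) thus ?case using alpha.a_sym[OF a_bang(1)] by (simp add: bangrel_def)
qed (simp_all add: bangrel_def)

lemma alpha_BangE: "alpha (Bang P) Y \<Longrightarrow> (\<And>P'. Y = Bang P' \<Longrightarrow> alpha P P' \<Longrightarrow> R) \<Longrightarrow> R"
  using alpha_bangrel unfolding bangrel_def by blast
lemma alpha_BangE2: "alpha Y (Bang P) \<Longrightarrow> (\<And>P'. Y = Bang P' \<Longrightarrow> alpha P' P \<Longrightarrow> R) \<Longrightarrow> R"
  by (erule alpha_BangE[OF alpha.a_sym]) (auto dest: alpha.a_sym)

lemma alpha_PNil_gen: "alpha X Y \<Longrightarrow> (X = PNil) = (Y = PNil)"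
  by (induction rule: alpha.induct) auto

lemma alpha_PNil: "alpha PNil Y \<Longrightarrow> Y = PNil" "alpha Y PNil \<Longrightarrow> Y = PNil"
  using alpha_PNil_gen by blast+

definition prerel where "prerel X Y \<longleftrightarrow> (\<forall>p P. X = Pre p P \<longrightarrow> (\<exists>p' P'. Y = Pre p' P' \<and> rebind 0 p' = rebind 0 p))"

lemma prerel_trans: "prerel X Y \<Longrightarrow> prerel Y Z \<Longrightarrow> prerel X Z"
  unfolding prerel_def by metis

lemma alpha_prerel: "alpha X Y \<Longrightarrow> prerel X Y \<and> prerel Y X"
proof (induction rule: alpha.induct)
  case (a_trans P Q R) thus ?case using prerel_trans by blast
next
  case (a_sym P Q) thus ?case by blast
next
  case (a_refl P) thus ?case by (simp add: prerel_def alpha.a_refl)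
qed (simp_all add: prerel_def)

lemma alpha_PreE: "alpha (Pre p P) Y \<Longrightarrow> (\<And>p' P'. Y = Pre p' P' \<Longrightarrow> rebind 0 p' = rebind 0 p \<Longrightarrow> R) \<Longrightarrow> R"
  using alpha_prerel unfolding prerel_def by blast
lemma alpha_PreE2: "alpha Y (Pre p P) \<Longrightarrow> (\<And>p' P'. Y = Pre p' P' \<Longrightarrow> rebind 0 p' = rebind 0 p \<Longrightarrow> R) \<Longrightarrow> R"
  using alpha_prerel unfolding prerel_def by blast

definition prenrel where "prenrel X Y \<longleftrightarrow> (\<forall>p P. X = Pre p P \<longrightarrow> pbinder p = None \<longrightarrow> (\<exists>P'. Y = Pre p P' \<and> alpha P P'))"

lemma prenrel_trans: "prenrel X Y \<Longrightarrow> prenrel Y Z \<Longrightarrow> prenrel X Z"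
  unfolding prenrel_def
proof (intro allI impI)
  fix p P assume a: "\<forall>p P. X = Pre p P \<longrightarrow> pbinder p = None \<longrightarrow> (\<exists>P'. Y = Pre p P' \<and> alpha P P')"
    and b: "\<forall>p P. Y = Pre p P \<longrightarrow> pbinder p = None \<longrightarrow> (\<exists>P'. Z = Pre p P' \<and> alpha P P')"
    and c: "X = Pre p P" and d: "pbinder p = None"
  from a c d obtain P1 where 1: "Y = Pre p P1" "alpha P P1" by blast
  from b 1 d obtain P2 where "Z = Pre p P2" "alpha P1 P2" by blast
  thus "\<exists>P'. Z = Pre p P' \<and> alpha P P'" using 1 alpha.a_trans by blast
qed

lemma alpha_prenrel: "alpha X Y \<Longrightarrow> prenrel X Y \<and> prenrel Y X"
proof (induction rule: alpha.induct)
  case (a_trans P Q R) thus ?case using prenrel_trans by blast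
next
  case (a_sym P Q) thus ?case by blast
next
  case (a_refl P) thus ?case by (simp add: prenrel_def alpha.a_refl)
next
  case (a_pre P Q p) thus ?case using alpha.a_sym[OF a_pre(1)] by (simp add: prenrel_def)
next
  case (a_in_rename p x y P) thus ?case using pbinder_rebind[OF a_in_rename(1), of y] by (simp add: prenrel_def)
qed (simp_all add: prenrel_def)

lemma alpha_PreNE: "alpha (Pre p P) Y \<Longrightarrow> pbinder p = None \<Longrightarrow> (\<And>P'. Y = Pre p P' \<Longrightarrow> alpha P P' \<Longrightarrow> R) \<Longrightarrow> R"
  using alpha_prenrel unfolding prenrel_def by blast
lemma alpha_PreNE2: "alpha Y (Pre p P) \<Longrightarrow> pbinder p = None \<Longrightarrow> (\<And>P'. Y = Pre p P' \<Longrightarrow> alpha P' P \<Longrightarrow> R) \<Longrightarrow> R"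
  by (erule alpha_PreNE[OF alpha.a_sym]) (auto dest: alpha.a_sym)
lemma alpha_PreN_iff: "pbinder p = None \<Longrightarrow> alpha (Pre p P) (Pre p' P') = (p' = p \<and> alpha P P')"
  by (auto elim: alpha_PreNE intro: alpha.a_pre)


lemma fresh_nat: "finite (F::nat set) \<Longrightarrow> \<exists>d. d \<notin> F"
  using ex_new_if_finite[OF infinite_UNIV_nat] by blast

definition resrel where
  "resrel c P c' P' \<longleftrightarrow> (\<exists>F. finite F \<and> (\<forall>d. d \<notin> F \<longrightarrow> alpha (swapc c d P) (swapc c' d P')))"

definition resrl where
  "resrl X Y \<longleftrightarrow> (\<forall>c P. X = Res c P \<longrightarrow> (\<exists>c' P'. Y = Res c' P' \<and> resrel c P c' P'))"

lemma resrel_trans: "resrel c P c' P' \<Longrightarrow> resrel c' P' c'' P'' \<Longrightarrow> resrel c P c'' P''"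
  unfolding resrel_def
proof -
  assume "\<exists>F. finite F \<and> (\<forall>d. d \<notin> F \<longrightarrow> alpha (swapc c d P) (swapc c' d P'))"
    and "\<exists>F. finite F \<and> (\<forall>d. d \<notin> F \<longrightarrow> alpha (swapc c' d P') (swapc c'' d P''))"
  then obtain F G where "finite F" "finite G" "\<forall>d. d \<notin> F \<longrightarrow> alpha (swapc c d P) (swapc c' d P')"
    "\<forall>d. d \<notin> G \<longrightarrow> alpha (swapc c' d P') (swapc c'' d P'')" by blast
  thus "\<exists>F. finite F \<and> (\<forall>d. d \<notin> F \<longrightarrow> alpha (swapc c d P) (swapc c'' d P''))"
    by (intro exI[of _ "F \<union> G"]) (auto intro: alpha.a_trans)
qed

lemma resrel_sym: "resrel c P c' P' \<Longrightarrow> resrel c' P' c P"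
  unfolding resrel_def using alpha.a_sym by blast

lemma resrl_trans: "resrl X Y \<Longrightarrow> resrl Y Z \<Longrightarrow> resrl X Z"
  unfolding resrl_def
proof (intro allI impI)
  fix c P assume a: "\<forall>c P. X = Res c P \<longrightarrow> (\<exists>c' P'. Y = Res c' P' \<and> resrel c P c' P')"
    and b: "\<forall>c P. Y = Res c P \<longrightarrow> (\<exists>c' P'. Z = Res c' P' \<and> resrel c P c' P')" and c: "X = Res c P"
  from a c obtain c1 P1 where 1: "Y = Res c1 P1" "resrel c P c1 P1" by blast
  from b 1 obtain c2 P2 where "Z = Res c2 P2" "resrel c1 P1 c2 P2" by blast
  thus "\<exists>c' P'. Z = Res c' P' \<and> resrel c P c' P'" using 1 resrel_trans by blast
qed

lemma finite_fnc': "finite {c. Ch c \<in> fn P}" by (rule finite_fnc)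

lemma resrel_rename: "Ch l \<notin> fn P \<Longrightarrow> resrel k P l (swapc k l P)"
proof (cases "k = l")
  case True thus ?thesis unfolding resrel_def by (auto intro: alpha.a_refl)
next
  case False
  assume l: "Ch l \<notin> fn P"
  show ?thesis unfolding resrel_def
  proof (intro exI[of _ "{k, l} \<union> {c. Ch c \<in> fn P}"] conjI allI impI)
    show "finite ({k, l} \<union> {c. Ch c \<in> fn P})" using finite_fnc by auto
  next
    fix d assume d: "d \<notin> {k, l} \<union> {c. Ch c \<in> fn P}"
    have e: "swapc l d (swapc k l P) = swapc k d (swapc l d P)"
      using d False by (simp add: swapc_comm[of l d k l])
    have "alpha P (swapc l d P)" using l d by (intro alpha_fresh_swap) auto
    hence "alpha (swapc k d P) (swapc k d (swapc l d P))" by (rule alpha_swapc)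
    thus "alpha (swapc k d P) (swapc l d (swapc k l P))" using e by simp
  qed
qed

lemma alpha_resrl: "alpha X Y \<Longrightarrow> resrl X Y \<and> resrl Y X"
proof (induction rule: alpha.induct)
  case (a_refl P) thus ?case unfolding resrl_def resrel_def by (auto intro: alpha.a_refl)
next
  case (a_sym P Q) thus ?case by blast
next
  case (a_trans P Q R) thus ?case using resrl_trans by blast
next
  case (a_res_rename l P k)
  have "resrel k P l (swapc k l P)" using a_res_rename by (rule resrel_rename)
  thus ?case unfolding resrl_def using resrel_sym by auto
next
  case (a_res P Q k)
  have "resrel k P k Q" "resrel k Q k P" unfolding resrel_def
    using alpha_swapc[OF a_res(1)] alpha_swapc[OF alpha.a_sym[OF a_res(1)]] by blast+
  thus ?case unfolding resrl_def by auto
qed (simp_all add: resrl_def)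

lemma alpha_ResE: "alpha (Res c P) Y \<Longrightarrow> (\<And>c' P'. Y = Res c' P' \<Longrightarrow> R) \<Longrightarrow> R"
  using alpha_resrl unfolding resrl_def by blast
lemma alpha_ResE2: "alpha Y (Res c P) \<Longrightarrow> (\<And>c' P'. Y = Res c' P' \<Longrightarrow> R) \<Longrightarrow> R"
  using alpha_resrl unfolding resrl_def by blast

lemma alpha_Res_iff: "alpha (Res c P) (Res c' P') = ((c' = c \<or> Ch c' \<notin> fn P) \<and> alpha (swapc c c' P) P')"
proof
  assume a: "alpha (Res c P) (Res c' P')"
  have fr: "c' = c \<or> Ch c' \<notin> fn P"
    using alpha_fn[OF a] by auto
  from a have "resrel c P c' P'" using alpha_resrl unfolding resrl_def by blast
  then obtain F where F: "finite F" "\<forall>d. d \<notin> F \<longrightarrow> alpha (swapc c d P) (swapc c' d P')"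
    unfolding resrel_def by blast
  obtain d where d: "d \<notin> F \<union> {c, c'} \<union> {e. Ch e \<in> fn P} \<union> {e. Ch e \<in> fn P'}"
    using fresh_nat[of "F \<union> {c, c'} \<union> {e. Ch e \<in> fn P} \<union> {e. Ch e \<in> fn P'}"] F(1) finite_fnc by auto
  have 1: "alpha (swapc c d P) (swapc c' d P')" using F d by auto
  have 2: "alpha (swapc c' d (swapc c d P)) P'"
    using alpha_swapc[OF 1, of c' d] by simp
  show "(c' = c \<or> Ch c' \<notin> fn P) \<and> alpha (swapc c c' P) P'"
  proof (cases "c' = c")
    case True thus ?thesis using 2 by simp
  next
    case False
    have e: "swapc c' d (swapc c d P) = swapc c c' (swapc c' d P)"
      using d False by (simp add: swapc_comm[of c' d c d])
    have "alpha P (swapc c' d P)" using fr False d by (intro alpha_fresh_swap) auto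
    hence "alpha (swapc c c' P) (swapc c c' (swapc c' d P))" by (rule alpha_swapc)
    thus ?thesis using 2 e fr by (auto intro: alpha.a_trans)
  qed
next
  assume "(c' = c \<or> Ch c' \<notin> fn P) \<and> alpha (swapc c c' P) P'"
  thus "alpha (Res c P) (Res c' P')"
    by (metis alpha.a_res alpha.a_res_rename alpha.a_trans swapc_id)
qed

definition isMN where "isMN a b X \<longleftrightarrow> (\<exists>q. X = Pre (PMatch a b q) PNil)"

lemma rebind_PMatch: "rebind y p = PMatch a b q \<Longrightarrow> \<exists>q'. p = PMatch a b q'"
  by (cases p) auto
lemma rebind_PIn: "rebind y p = PIn a z \<Longrightarrow> \<exists>z'. p = PIn a z'"
  by (cases p) auto
lemma swapv_PNil: "swapv x y P = PNil \<longleftrightarrow> P = PNil"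
  by (cases P) auto

lemma alpha_isMN: "alpha X Y \<Longrightarrow> isMN a b X = isMN a b Y"
proof (induction rule: alpha.induct)
  case (a_in_rename p x y P)
  show ?case unfolding isMN_def
  proof
    assume "\<exists>q. Pre p P = Pre (PMatch a b q) PNil"
    then obtain q where "p = PMatch a b q" "P = PNil" by auto
    thus "\<exists>q. Pre (rebind y p) (swapv x y P) = Pre (PMatch a b q) PNil" by auto
  next
    assume "\<exists>q. Pre (rebind y p) (swapv x y P) = Pre (PMatch a b q) PNil"
    then obtain q where "rebind y p = PMatch a b q" "swapv x y P = PNil" by auto
    thus "\<exists>q. Pre p P = Pre (PMatch a b q) PNil" using rebind_PMatch swapv_PNil by blast
  qed
next
  case (a_pre P Q p) thus ?case using alpha_PNil_gen[OF a_pre(1)] by (auto simp: isMN_def)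
qed (auto simp: isMN_def)

abbreviation Msh :: "chan \<Rightarrow> var \<Rightarrow> chan \<Rightarrow> prefix \<Rightarrow> proc" where
  "Msh m y l p \<equiv> Pre (PIn (Ch m) y) (Pre (PMatch (Var y) (Ch l) p) PNil)"
abbreviation M0sh :: "chan \<Rightarrow> var \<Rightarrow> proc" where
  "M0sh m y \<equiv> Pre (PIn (Ch m) y) PNil"
abbreviation Tsh :: "proc \<Rightarrow> chan \<Rightarrow> chan \<Rightarrow> var \<Rightarrow> proc \<Rightarrow> proc" where
  "Tsh Mz k l x P \<equiv> Res k (Par (Res l (Pre (POut (Ch k) l) Mz)) (Pre (PIn (Ch k) x) P))"

definition isM where "isM m l X \<longleftrightarrow> (\<exists>y q. X = Msh m y l q)"
definition isM0 where "isM0 m X \<longleftrightarrow> (\<exists>y. X = M0sh m y)"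

lemma alpha_isM: "alpha X Y \<Longrightarrow> isM m l X = isM m l Y"
proof (induction rule: alpha.induct)
  case (a_in_rename p x y P)
  show ?case unfolding isM_def
  proof
    assume "\<exists>y' q. Pre p P = Msh m y' l q"
    then obtain q where "p = PIn (Ch m) x" "P = Pre (PMatch (Var x) (Ch l) q) PNil"
      using a_in_rename by auto
    thus "\<exists>y' q. Pre (rebind y p) (swapv x y P) = Msh m y' l q" by auto
  next
    assume "\<exists>y' q. Pre (rebind y p) (swapv x y P) = Msh m y' l q"
    then obtain y' q where 1: "rebind y p = PIn (Ch m) y'" "swapv x y P = Pre (PMatch (Var y') (Ch l) q) PNil"
      by auto
    obtain z where "p = PIn (Ch m) z" using rebind_PIn[OF 1(1)] by blast
    hence p: "p = PIn (Ch m) x" "y' = y" using a_in_rename 1 by auto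
    have "P = swapv x y (swapv x y P)" by simp
    also have "\<dots> = Pre (PMatch (Var x) (Ch l) (swapv_pre x y q)) PNil" using 1 p by simp
    finally show "\<exists>y' q. Pre p P = Msh m y' l q" using p by auto
  qed
next
  case (a_pre P Q p)
  show ?case unfolding isM_def
    using alpha_isMN[OF a_pre(1), of "Var _" "Ch l"] by (cases p) (auto simp: isMN_def)
qed (auto simp: isM_def)

lemma alpha_isM0: "alpha X Y \<Longrightarrow> isM0 m X = isM0 m Y"
proof (induction rule: alpha.induct)
  case (a_in_rename p x y P)
  show ?case unfolding isM0_def
  proof
    assume "\<exists>y'. Pre p P = M0sh m y'"
    thus "\<exists>y'. Pre (rebind y p) (swapv x y P) = M0sh m y'" using a_in_rename by auto
  next
    assume "\<exists>y'. Pre (rebind y p) (swapv x y P) = M0sh m y'"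
    then obtain y' where 1: "rebind y p = PIn (Ch m) y'" "swapv x y P = PNil" by auto
    thus "\<exists>y'. Pre p P = M0sh m y'" using rebind_PIn[OF 1(1)] swapv_PNil by auto
  qed
next
  case (a_pre P Q p) thus ?case using alpha_PNil_gen[OF a_pre(1)] by (auto simp: isM0_def)
qed (auto simp: isM0_def)


fun pfo :: "prefix \<Rightarrow> chan set" where
  "pfo (POut a c) = {c}"
| "pfo (PIn a x) = {}"
| "pfo (PMatch a b p) = pfo p"

fun fo :: "proc \<Rightarrow> chan set" where
  "fo PNil = {}"
| "fo (Pre p P) = pfo p \<union> fo P"
| "fo (Par P Q) = fo P \<union> fo Q"
| "fo (Res c P) = fo P - {c}"
| "fo (Bang P) = fo P"

fun aobj :: "act \<Rightarrow> chan set" where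
  "aobj (AOut k n) = {n}"
| "aobj (AIn k n) = {n}"
| "aobj (ABOut k n) = {n}"
| "aobj ATau = {}"

lemma an_simps[simp]: "an (AOut k l) = {Ch k, Ch l}" "an (AIn k l) = {Ch k, Ch l}"
  "an (ABOut k l) = {Ch k, Ch l}" "an ATau = {}"
  by (auto simp: an_def)

lemma pfo_pnames: "c \<in> pfo p \<Longrightarrow> Ch c \<in> pnames p"
  by (induction p) auto
lemma fo_fn: "c \<in> fo P \<Longrightarrow> Ch c \<in> fn P"
  by (induction P) (auto simp: pfo_pnames split: option.splits)

lemma pfo_swapc: "pfo (swapc_pre a b p) = swp a b ` pfo p"
  by (induction p) auto
lemma fo_swapc: "fo (swapc a b P) = swp a b ` fo P"
proof (induction P)
  case (Res c P)
  have "swp a b ` (fo P - {c}) = swp a b ` fo P - {swp a b c}"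
    by (subst image_set_diff) (auto simp: inj_on_def)
  thus ?case using Res by simp
qed (auto simp: pfo_swapc image_Un)

lemma mem_fo_swapc: "(c \<in> fo (swapc a b P)) = (swp a b c \<in> fo P)"
  by (simp add: fo_swapc mem_inv_image)

lemma pfo_swapv[simp]: "pfo (swapv_pre x y p) = pfo p"
  by (induction p) auto
lemma fo_swapv[simp]: "fo (swapv x y P) = fo P"
  by (induction P) auto
lemma pfo_rebind[simp]: "pfo (rebind y p) = pfo p"
  by (induction p) auto
lemma pfo_subst[simp]: "pfo (subst_pre x l p) = pfo p"
  by (induction p) auto
lemma fo_subst[simp]: "fo (subst x l P) = fo P"
  by (induction P) auto

lemma alpha_fo: "alpha P Q \<Longrightarrow> fo P = fo Q"
proof (induction rule: alpha.induct)
  case (a_res_rename l P k)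
  have "l \<notin> fo P" using a_res_rename fo_fn by blast
  show ?case
  proof (rule set_eqI)
    fix c show "c \<in> fo (Res k P) \<longleftrightarrow> c \<in> fo (Res l (swapc k l P))"
      using \<open>l \<notin> fo P\<close> by (auto simp: mem_fo_swapc swp_def)
  qed
qed auto

lemma pbinder_subst[simp]: "pbinder (subst_pre x l p) = pbinder p"
  by (induction p) auto

lemma pnames_subst: "pnames (subst_pre x l p) \<subseteq> (pnames p - {Var x}) \<union> {Ch l}"
proof (induction p)
  case (POut a c) thus ?case by (cases a) auto
next
  case (PIn a z) thus ?case by (cases a) auto
next
  case (PMatch a b p) thus ?case by (cases a; cases b) auto
qed

lemma fn_subst: "fn (subst x l P) \<subseteq> (fn P - {Var x}) \<union> {Ch l}"
proof (induction P)
  case (Pre p P)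
  thus ?case using pnames_subst[of x l p] by (auto split: option.splits)
qed auto

lemma bnc_subst[simp]: "bnc (subst x l P) = bnc P"
  by (induction P) auto

lemma step_out_fo: "step X a X' \<Longrightarrow> a = AOut k n \<Longrightarrow> n \<in> fo X"
proof (induction arbitrary: k n rule: step.induct)
  case (s_alpha P P' a Q) thus ?case using alpha_fo by blast
qed auto

lemma step_fo: "step X a X' \<Longrightarrow> fo X' \<subseteq> fo X \<union> aobj a"
proof (induction rule: step.induct)
  case (s_alpha P P' a Q) thus ?case using alpha_fo by blast
next
  case (s_comm_l P k l P' Q Q') thus ?case using step_out_fo by fastforce
next
  case (s_comm_r P k l P' Q Q') thus ?case using step_out_fo by fastforce
next
  case (s_rep_comm P k l P' P'') thus ?case using step_out_fo by fastforce
qed auto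

lemma step_fn: "step X a X' \<Longrightarrow> fn X' \<subseteq> fn X \<union> Ch ` aobj a"
proof (induction rule: step.induct)
  case (s_in l P k x) thus ?case using fn_subst[of x l P] by auto
next
  case (s_alpha P P' a Q) thus ?case using alpha_fn by blast
next
  case (s_comm_l P k l P' Q Q') thus ?case using step_out_fo fo_fn by fastforce
next
  case (s_comm_r P k l P' Q Q') thus ?case using step_out_fo fo_fn by fastforce
next
  case (s_rep_comm P k l P' P'') thus ?case using step_out_fo fo_fn by fastforce
next
  case (s_res P a P' k) thus ?case by (cases a) auto
qed auto

lemma step_pre_act: "step X a X' \<Longrightarrow> X = Pre p P \<Longrightarrow> (\<exists>k n. a = AOut k n \<or> a = AIn k n)"
proof (induction arbitrary: p P rule: step.induct)
  case (s_alpha P P' a Q) thus ?case by (auto elim: alpha_PreE)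
qed auto

lemma step_bout: "step X a X' \<Longrightarrow> a = ABOut k n \<Longrightarrow> Ch n \<notin> fn X \<and> k \<noteq> n"
proof (induction arbitrary: k n rule: step.induct)
  case (s_alpha P P' a Q) thus ?case using alpha_fn by blast
next
  case (s_match p P a P' c) thus ?case using step_pre_act[OF s_match(1) refl] by auto
qed auto

fun swapa :: "chan \<Rightarrow> chan \<Rightarrow> act \<Rightarrow> act" where
  "swapa u v (AOut k l) = AOut (swp u v k) (swp u v l)"
| "swapa u v (AIn k l) = AIn (swp u v k) (swp u v l)"
| "swapa u v (ABOut k l) = ABOut (swp u v k) (swp u v l)"
| "swapa u v ATau = ATau"

lemma an_swapa: "an (swapa u v a) = swapc_nm u v ` an a"
  by (cases a) auto
lemma abn_swapa: "abn (swapa u v a) = swapc_nm u v ` abn a"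
  by (cases a) auto
lemma swapa_inv[simp]: "swapa u v (swapa u v a) = a"
  by (cases a) auto

lemma swapc_nm_image_inter: "swapc_nm u v ` A \<inter> swapc_nm u v ` B = swapc_nm u v ` (A \<inter> B)"
  by (auto simp: image_iff)

lemma mem_swapc_nm_image[simp]: "(swapc_nm u v n \<in> swapc_nm u v ` A) = (n \<in> A)"
  by (auto simp: image_iff)

lemma step_swapc: "step P a Q \<Longrightarrow> step (swapc u v P) (swapa u v a) (swapc u v Q)"
proof (induction rule: step.induct)
  case (s_out k l P) thus ?case by (auto intro: step.s_out)
next
  case (s_in l P k x)
  have "swp u v l \<notin> bnc (swapc u v P)" using s_in by (auto simp: bnc_swapc)
  hence "step (Pre (PIn (Ch (swp u v k)) x) (swapc u v P)) (AIn (swp u v k) (swp u v l)) (subst x (swp u v l) (swapc u v P))"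
    by (rule step.s_in)
  thus ?case by (simp add: subst_swapc)
next
  case (s_match p P a P' c) thus ?case by (auto intro: step.s_match)
next
  case (s_res P a P' k)
  have "Ch (swp u v k) \<notin> an (swapa u v a)" using s_res(2)
    by (metis an_swapa mem_swapc_nm_image swapc_nm.simps(1))
  thus ?case using s_res by (auto intro: step.s_res)
next
  case (s_open P k l Q)
  have "step (swapc u v P) (AOut (swp u v k) (swp u v l)) (swapc u v Q)" using s_open.IH by simp
  thus ?case using s_open(2) step.s_open by fastforce
next
  case (s_par_l P a Q R)
  have "abn (swapa u v a) \<inter> fn (swapc u v R) = {}" using s_par_l(2)
    by (simp add: abn_swapa fn_swapc swapc_nm_image_inter)
  thus ?case using s_par_l by (auto intro: step.s_par_l)
next
  case (s_par_r P a Q R)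
  have "abn (swapa u v a) \<inter> fn (swapc u v R) = {}" using s_par_r(2)
    by (simp add: abn_swapa fn_swapc swapc_nm_image_inter)
  thus ?case using s_par_r by (auto intro: step.s_par_r)
next
  case (s_comm_l P k l P' Q Q') thus ?case using step.s_comm_l by fastforce
next
  case (s_comm_r P k l P' Q Q') thus ?case using step.s_comm_r by fastforce
next
  case (s_close_l P k l P' Q Q')
  have "Ch (swp u v l) \<notin> fn (swapc u v Q)" using s_close_l(3) by (simp add: Ch_fn_swapc)
  thus ?case using s_close_l step.s_close_l by fastforce
next
  case (s_close_r P k l P' Q Q')
  have "Ch (swp u v l) \<notin> fn (swapc u v Q)" using s_close_r(3) by (simp add: Ch_fn_swapc)
  thus ?case using s_close_r step.s_close_r by fastforce
next
  case (s_rep_act P a P') thus ?case by (auto intro: step.s_rep_act)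
next
  case (s_rep_comm P k l P' P'') thus ?case using step.s_rep_comm by fastforce
next
  case (s_rep_close P k l P' P'')
  have "Ch (swp u v l) \<notin> fn (swapc u v P)" using s_rep_close(3) by (simp add: Ch_fn_swapc)
  thus ?case using s_rep_close step.s_rep_close by fastforce
next
  case (s_alpha P P' a Q) thus ?case using alpha_swapc step.s_alpha by blast
qed


lemma Out_step: "step V a V' \<Longrightarrow> alpha (Pre (POut (Ch j) c) X) V \<Longrightarrow> a = AOut j c \<and> alpha V (Pre (POut (Ch j) c) V')"
proof (induction arbitrary: X rule: step.induct)
  case (s_out k l P) thus ?case by (auto elim!: alpha_PreNE intro: alpha.a_refl)
next
  case (s_alpha P P' a Q) thus ?case by (meson alpha.a_trans)
qed (auto elim!: alpha_PreNE)

lemma L_out: "step W a W' \<Longrightarrow> alpha (Res l (Pre (POut (Ch k) l) Mz)) W \<Longrightarrow>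
   k \<noteq> l \<and> (\<exists>l1. a = ABOut k l1 \<and> alpha W (Res l1 (Pre (POut (Ch k) l1) W')))"
proof (induction arbitrary: l Mz rule: step.induct)
  case (s_alpha P P' a Q)
  then obtain l1 where "k \<noteq> l" "a = ABOut k l1" "alpha P' (Res l1 (Pre (POut (Ch k) l1) Q))"
    by (meson alpha.a_trans)
  moreover have "alpha P (Res l1 (Pre (POut (Ch k) l1) Q))" by (rule alpha.a_trans[OF s_alpha(1) calculation(3)])
  ultimately show ?case by blast
next
  case (s_res P a P' c)
  from s_res(4) have "alpha (swapc l c (Pre (POut (Ch k) l) Mz)) P" by (simp add: alpha_Res_iff)
  hence "alpha (Pre (POut (Ch (swp l c k)) c) (swapc l c Mz)) P" by simp
  from Out_step[OF s_res(1) this] have "a = AOut (swp l c k) c" ..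
  thus ?case using s_res(2) by simp
next
  case (s_open P j c Q)
  from s_open(4) have fr: "c = l \<or> Ch c \<notin> fn (Pre (POut (Ch k) l) Mz)"
    and al: "alpha (swapc l c (Pre (POut (Ch k) l) Mz)) P" by (simp_all add: alpha_Res_iff)
  from al have "alpha (Pre (POut (Ch (swp l c k)) c) (swapc l c Mz)) P" by simp
  from Out_step[OF s_open(1) this] have j: "AOut j c = AOut (swp l c k) c"
    and al2: "alpha P (Pre (POut (Ch (swp l c k)) c) Q)" by auto
  have kl: "k \<noteq> l \<and> j = k"
  proof (cases "c = l")
    case True thus ?thesis using j s_open(2) by auto
  next
    case False
    hence "c \<noteq> k" using fr by auto
    thus ?thesis using j s_open(2) False by (auto simp: swp_def split: if_splits)
  qed
  have "swp l c k = k" using j kl by simp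
  hence "alpha (Res c P) (Res c (Pre (POut (Ch k) c) Q))" using al2 by (auto intro: alpha.a_res)
  thus ?case using kl by auto
qed (auto elim!: alpha_ResE)

lemma In_step: "step R a R' \<Longrightarrow> alpha (Pre (PIn (Ch k) x) P) R \<Longrightarrow>
   \<exists>n x1 P1. a = AIn k n \<and> R' = subst x1 n P1 \<and> alpha R (Pre (PIn (Ch k) x1) P1) \<and> n \<notin> bnc P1"
proof (induction arbitrary: x P rule: step.induct)
  case (s_in l P k' x')
  from s_in(2) have "k' = k" by (auto elim!: alpha_PreE)
  thus ?case using s_in(1) by (auto intro: alpha.a_refl)
next
  case (s_match p P a P' c) thus ?case by (auto elim!: alpha_PreE)
next
  case (s_alpha P P' a Q) thus ?case by (meson alpha.a_trans)
qed (auto elim!: alpha_PreE)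

lemma Par_step: "step Z a Z' \<Longrightarrow> alpha (Par (Res l (Pre (POut (Ch k) l) Mz)) (Pre (PIn (Ch k) x) P)) Z \<Longrightarrow>
   (\<exists>n. a = ABOut k n) \<or> (\<exists>n. a = AIn k n) \<or>
   (a = ATau \<and> (\<exists>l1 x1 P1 Mz1. Z' = Res l1 (Par Mz1 (subst x1 l1 P1)) \<and>
      alpha Z (Par (Res l1 (Pre (POut (Ch k) l1) Mz1)) (Pre (PIn (Ch k) x1) P1)) \<and>
      k \<noteq> l1 \<and> l1 \<notin> bnc P1 \<and> Ch l1 \<notin> fn (Pre (PIn (Ch k) x1) P1)))"
proof (induction arbitrary: l Mz x P rule: step.induct)
  case (s_alpha P0 P' a Q)
  from s_alpha(3)[OF alpha.a_trans[OF s_alpha(4) s_alpha(1)]] show ?case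
  proof (elim disjE conjE exE)
    fix l1 x1 P1 Mz1 assume "a = ATau" "Q = Res l1 (Par Mz1 (subst x1 l1 P1))"
      "alpha P' (Par (Res l1 (Pre (POut (Ch k) l1) Mz1)) (Pre (PIn (Ch k) x1) P1))"
      "k \<noteq> l1" "l1 \<notin> bnc P1" "Ch l1 \<notin> fn (Pre (PIn (Ch k) x1) P1)"
    moreover have "alpha P0 (Par (Res l1 (Pre (POut (Ch k) l1) Mz1)) (Pre (PIn (Ch k) x1) P1))"
      by (rule alpha.a_trans[OF s_alpha(1) calculation(3)])
    ultimately show ?thesis by blast
  qed auto
next
  case (s_par_l W a W' R)
  from s_par_l(4) have "alpha (Res l (Pre (POut (Ch k) l) Mz)) W" by (auto elim!: alpha_ParE)
  from L_out[OF s_par_l(1) this] show ?case by auto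
next
  case (s_par_r W a W' R)
  from s_par_r(4) have "alpha (Pre (PIn (Ch k) x) P) W" by (auto elim!: alpha_ParE)
  from In_step[OF s_par_r(1) this] show ?case by auto
next
  case (s_comm_l W k' n W' R R')
  from s_comm_l(5) have "alpha (Res l (Pre (POut (Ch k) l) Mz)) W" by (auto elim!: alpha_ParE)
  from L_out[OF s_comm_l(1) this] show ?case by auto
next
  case (s_comm_r W k' n W' R R')
  from s_comm_r(5) have "alpha (Res l (Pre (POut (Ch k) l) Mz)) R" by (auto elim!: alpha_ParE)
  from L_out[OF s_comm_r(2) this] show ?case by auto
next
  case (s_close_l W k' n W' R R')
  from s_close_l(6) have a1: "alpha (Res l (Pre (POut (Ch k) l) Mz)) W" and a2: "alpha (Pre (PIn (Ch k) x) P) R"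
    by (auto elim!: alpha_ParE)
  from L_out[OF s_close_l(1) a1] have kk: "k' = k" and aW: "alpha W (Res n (Pre (POut (Ch k) n) W'))" by auto
  from In_step[OF s_close_l(2) a2] obtain x1 P1 where R': "R' = subst x1 n P1"
    and aR: "alpha R (Pre (PIn (Ch k) x1) P1)" and nb: "n \<notin> bnc P1" by auto
  have "k \<noteq> n" using step_bout[OF s_close_l(1) refl] kk by auto
  moreover have "Ch n \<notin> fn (Pre (PIn (Ch k) x1) P1)" using s_close_l(3) alpha_fn[OF aR] by simp
  moreover have "alpha (Par W R) (Par (Res n (Pre (POut (Ch k) n) W')) (Pre (PIn (Ch k) x1) P1))"
    using aW aR by (simp add: alpha_Par_iff)
  ultimately show ?case using R' nb by blast
next
  case (s_close_r W k' n W' R R')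
  from s_close_r(6) have "alpha (Res l (Pre (POut (Ch k) l) Mz)) R" by (auto elim!: alpha_ParE)
  from L_out[OF s_close_r(2) this] show ?case by auto
qed (auto elim!: alpha_ParE)

lemma T_step: "step Y a Y' \<Longrightarrow> alpha (Tsh Mz k l x P) Y \<Longrightarrow>
   a = ATau \<and> (\<exists>k1 l1 x1 P1 Mz1. Y' = Res k1 (Res l1 (Par Mz1 (subst x1 l1 P1))) \<and>
      alpha Y (Tsh Mz1 k1 l1 x1 P1) \<and> k1 \<noteq> l1 \<and> l1 \<notin> bnc P1 \<and> Ch l1 \<notin> fn (Pre (PIn (Ch k1) x1) P1))"
proof (induction arbitrary: Mz k l x P rule: step.induct)
  case (s_alpha P0 P' a Q)
  from s_alpha(3)[OF alpha.a_trans[OF s_alpha(4) s_alpha(1)]] obtain k1 l1 x1 P1 Mz1 where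
    "a = ATau" "Q = Res k1 (Res l1 (Par Mz1 (subst x1 l1 P1)))"
      "alpha P' (Tsh Mz1 k1 l1 x1 P1)" "k1 \<noteq> l1" "l1 \<notin> bnc P1" "Ch l1 \<notin> fn (Pre (PIn (Ch k1) x1) P1)"
    by blast
  moreover have "alpha P0 (Tsh Mz1 k1 l1 x1 P1)"
    by (rule alpha.a_trans[OF s_alpha(1) calculation(3)])
  ultimately show ?case by blast
next
  case (s_res Z a Z' k1)
  from s_res(4) have "alpha (swapc k k1 (Par (Res l (Pre (POut (Ch k) l) Mz)) (Pre (PIn (Ch k) x) P))) Z"
    by (simp add: alpha_Res_iff)
  hence "alpha (Par (Res (swp k k1 l) (Pre (POut (Ch k1) (swp k k1 l)) (swapc k k1 Mz))) (Pre (PIn (Ch k1) x) (swapc k k1 P))) Z"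
    by simp
  from Par_step[OF s_res(1) this] s_res(2) obtain l1 x1 P1 Mz1 where
    "a = ATau" "Z' = Res l1 (Par Mz1 (subst x1 l1 P1))"
    "alpha Z (Par (Res l1 (Pre (POut (Ch k1) l1) Mz1)) (Pre (PIn (Ch k1) x1) P1))"
    "k1 \<noteq> l1" "l1 \<notin> bnc P1" "Ch l1 \<notin> fn (Pre (PIn (Ch k1) x1) P1)" by auto
  thus ?case by (auto intro!: alpha.a_res)
next
  case (s_open Z j k1 Q)
  from s_open(4) have "alpha (swapc k k1 (Par (Res l (Pre (POut (Ch k) l) Mz)) (Pre (PIn (Ch k) x) P))) Z"
    by (simp add: alpha_Res_iff)
  hence "alpha (Par (Res (swp k k1 l) (Pre (POut (Ch k1) (swp k k1 l)) (swapc k k1 Mz))) (Pre (PIn (Ch k1) x) (swapc k k1 P))) Z"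
    by simp
  from Par_step[OF s_open(1) this] show ?case by auto
qed (auto elim!: alpha_ResE)

lemma T_replay: "k1 \<noteq> l1 \<Longrightarrow> l1 \<notin> bnc P1 \<Longrightarrow> Ch l1 \<notin> fn (Pre (PIn (Ch k1) x1) P1) \<Longrightarrow>
  step (Tsh Mz k1 l1 x1 P1) ATau (Res k1 (Res l1 (Par Mz (subst x1 l1 P1))))"
proof -
  assume a: "k1 \<noteq> l1" "l1 \<notin> bnc P1" "Ch l1 \<notin> fn (Pre (PIn (Ch k1) x1) P1)"
  have "step (Res l1 (Pre (POut (Ch k1) l1) Mz)) (ABOut k1 l1) Mz"
    using a by (intro step.s_open step.s_out)
  moreover have "step (Pre (PIn (Ch k1) x1) P1) (AIn k1 l1) (subst x1 l1 P1)"
    using a by (intro step.s_in)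
  ultimately have "step (Par (Res l1 (Pre (POut (Ch k1) l1) Mz)) (Pre (PIn (Ch k1) x1) P1)) ATau
       (Res l1 (Par Mz (subst x1 l1 P1)))" using a by (intro step.s_close_l)
  thus ?thesis by (intro step.s_res) auto
qed

lemma Tsh_alpha_iff: "alpha (Tsh Mz k l x P) (Tsh Mz1 k1 l1 x1 P1) \<longleftrightarrow>
  (k1 = k \<or> Ch k1 \<notin> fn (Par (Res l (Pre (POut (Ch k) l) Mz)) (Pre (PIn (Ch k) x) P))) \<and>
  (l1 = swp k k1 l \<or> Ch l1 \<notin> fn (Pre (POut (Ch k1) (swp k k1 l)) (swapc k k1 Mz))) \<and>
  k1 = swp (swp k k1 l) l1 k1 \<and>
  alpha (swapc (swp k k1 l) l1 (swapc k k1 Mz)) Mz1 \<and>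
  alpha (Pre (PIn (Ch k1) x) (swapc k k1 P)) (Pre (PIn (Ch k1) x1) P1)"
  by (simp add: alpha_Res_iff alpha_Par_iff alpha_PreN_iff)


inductive S :: "chan set \<Rightarrow> proc \<Rightarrow> proc \<Rightarrow> bool" where
  S_refl: "S L P P"
| S_par: "S L P1 Q1 \<Longrightarrow> S L P2 Q2 \<Longrightarrow> S L (Par P1 P2) (Par Q1 Q2)"
| S_res: "S (L - {c}) P Q \<Longrightarrow> S L (Res c P) (Res c Q)"
| S_prot: "S (insert c L) P Q \<Longrightarrow> c \<notin> fo Q \<Longrightarrow> S L (Res c P) (Res c Q)"
| S_M: "l \<in> L \<Longrightarrow> S L (Msh m y l p) (M0sh m y')"
| S_dead: "n \<noteq> l \<Longrightarrow> S L (Pre (PMatch (Ch n) (Ch l) p) PNil) PNil"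
| S_T: "S L (Tsh (Msh m y l p) k l x P) (Tsh (M0sh m y) k l x P)"

lemma S_fn: "S L A B \<Longrightarrow> fn B \<subseteq> fn A"
  by (induction rule: S.induct) auto

lemma S_cong: "S L0 A B \<Longrightarrow> (\<forall>l\<in>L0. Ch l \<in> fn A \<longrightarrow> l \<in> L1) \<Longrightarrow> S L1 A B"
proof (induction arbitrary: L1 rule: S.induct)
  case (S_refl L P) show ?case by (rule S.S_refl)
next
  case (S_par L P1 Q1 P2 Q2) thus ?case by (auto intro!: S.S_par)
next
  case (S_res L c P Q)
  have "S (L1 - {c}) P Q" using S_res.IH[of "L1 - {c}"] S_res.prems by auto
  thus ?case by (rule S.S_res)
next
  case (S_prot c L P Q)
  have "S (insert c L1) P Q" using S_prot.IH[of "insert c L1"] S_prot.prems by auto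
  thus ?case using S_prot.hyps(2) by (rule S.S_prot)
next
  case (S_M l L m y p y') thus ?case by (auto intro!: S.S_M)
next
  case (S_dead n l L p) show ?case by (rule S.S_dead[OF S_dead.hyps])
next
  case (S_T L m y l p k x P) show ?case by (rule S.S_T)
qed

lemma S_mono: "S L0 A B \<Longrightarrow> L0 \<subseteq> L \<Longrightarrow> S L A B"
  using S_cong by blast

lemma S_swapc: "S L A B \<Longrightarrow> S (swp u v ` L) (swapc u v A) (swapc u v B)"
proof (induction rule: S.induct)
  case (S_refl L P) show ?case by (rule S.S_refl)
next
  case (S_par L P1 Q1 P2 Q2) thus ?case by (auto intro!: S.S_par)
next
  case (S_res L c P Q)
  have "swp u v ` (L - {c}) = swp u v ` L - {swp u v c}"
    by (subst image_set_diff) (auto simp: inj_on_def)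
  thus ?case using S_res by (auto intro!: S.S_res)
next
  case (S_prot c L P Q)
  have "swp u v c \<notin> fo (swapc u v Q)" using S_prot.hyps(2) by (simp add: mem_fo_swapc)
  thus ?case using S_prot by (auto intro!: S.S_prot)
next
  case (S_M l L m y p y')
  have "S (swp u v ` L) (Msh (swp u v m) y (swp u v l) (swapc_pre u v p)) (M0sh (swp u v m) y')"
    using S_M by (intro S.S_M) auto
  thus ?case by simp
next
  case (S_dead n l L p)
  have "S (swp u v ` L) (Pre (PMatch (Ch (swp u v n)) (Ch (swp u v l)) (swapc_pre u v p)) PNil) PNil"
    using S_dead by (intro S.S_dead) auto
  thus ?case by simp
next
  case (S_T L m y l p k x P)
  show ?case by (simp add: S.S_T)
qed

definition NoOutB :: "chan set \<Rightarrow> proc \<Rightarrow> bool" where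
  "NoOutB L B \<longleftrightarrow> (\<forall>l\<in>L. l \<notin> fo B)"

definition CondA :: "chan set \<Rightarrow> proc \<Rightarrow> act \<Rightarrow> bool" where
  "CondA L A a \<longleftrightarrow> (\<forall>k n. a = AIn k n \<longrightarrow> Ch n \<in> fn A \<longrightarrow> n \<notin> L)"

fun bno :: "act \<Rightarrow> chan set" where
  "bno (ABOut k n) = {n}"
| "bno _ = {}"

lemma alpha_M0: "alpha (M0sh m y) (M0sh m y1)"
proof (cases "y = y1")
  case True thus ?thesis by (simp add: alpha.a_refl)
next
  case False
  have "alpha (Pre (PIn (Ch m) y) PNil) (Pre (rebind y1 (PIn (Ch m) y)) (swapv y y1 PNil))"
    by (rule alpha.a_in_rename) auto
  thus ?thesis by simp
qed

lemma TcaseA: "alpha (Tsh (Msh m y l p) k l x P) Ax \<Longrightarrow> step Ax a Ax' \<Longrightarrow>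
  \<exists>B' A1' B1'. step (Tsh (M0sh m y) k l x P) a B' \<and> alpha Ax' A1' \<and> S L A1' B1' \<and> alpha B1' B' \<and> a = ATau"
proof -
  assume h1: "alpha (Tsh (Msh m y l p) k l x P) Ax" and h2: "step Ax a Ax'"
  from T_step[OF h2 h1] obtain k1 l1 x1 P1 Mz1 where
    a: "a = ATau" and Ax': "Ax' = Res k1 (Res l1 (Par Mz1 (subst x1 l1 P1)))"
    and al: "alpha Ax (Tsh Mz1 k1 l1 x1 P1)" and c1: "k1 \<noteq> l1" "l1 \<notin> bnc P1" "Ch l1 \<notin> fn (Pre (PIn (Ch k1) x1) P1)"
    by blast
  have "alpha (Tsh (Msh m y l p) k l x P) (Tsh Mz1 k1 l1 x1 P1)" using h1 al by (rule alpha.a_trans)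
  note TC = this[unfolded Tsh_alpha_iff]
  define l' where "l' = swp k k1 l"
  have "alpha (Msh (swp l' l1 (swp k k1 m)) y l1 (swapc_pre l' l1 (swapc_pre k k1 p))) Mz1"
    using TC by (simp add: l'_def)
  hence "isM (swp l' l1 (swp k k1 m)) l1 Mz1" using alpha_isM unfolding isM_def by blast
  then obtain y1 p1 where Mz1: "Mz1 = Msh (swp l' l1 (swp k k1 m)) y1 l1 p1" unfolding isM_def by blast
  have TC0: "alpha (Tsh (M0sh m y) k l x P) (Tsh (M0sh (swp l' l1 (swp k k1 m)) y1) k1 l1 x1 P1)"
    unfolding Tsh_alpha_iff using TC alpha_M0 by (auto simp: l'_def)
  define B' where "B' = Res k1 (Res l1 (Par (M0sh (swp l' l1 (swp k k1 m)) y1) (subst x1 l1 P1)))"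
  have st: "step (Tsh (M0sh m y) k l x P) ATau B'"
    unfolding B'_def using TC0 T_replay[OF c1] by (rule step.s_alpha)
  have "l1 \<notin> fo P1" using c1(3) fo_fn by auto
  hence "S L Ax' B'" unfolding Ax' B'_def Mz1
    by (intro S.S_res S.S_prot S.S_par S.S_M S.S_refl) auto
  thus ?thesis using st a by (blast intro: alpha.a_refl)
qed


lemma fresh_exists: "finite F \<Longrightarrow> \<exists>d::nat. d \<notin> F" by (rule fresh_nat)

lemma TcaseB: "alpha (Tsh (M0sh m y) k l x P) Bx \<Longrightarrow> step Bx a Bx' \<Longrightarrow>
  \<exists>A' A1' B1'. step (Tsh (Msh m y l p) k l x P) a A' \<and> alpha A' A1' \<and> S L A1' B1' \<and> alpha B1' Bx' \<and> a = ATau"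
proof -
  assume h1: "alpha (Tsh (M0sh m y) k l x P) Bx" and h2: "step Bx a Bx'"
  from T_step[OF h2 h1] obtain k1 l1 x1 P1 Mz1 where
    a: "a = ATau" and Bx': "Bx' = Res k1 (Res l1 (Par Mz1 (subst x1 l1 P1)))"
    and al: "alpha Bx (Tsh Mz1 k1 l1 x1 P1)" and c1: "k1 \<noteq> l1" "l1 \<notin> bnc P1" "Ch l1 \<notin> fn (Pre (PIn (Ch k1) x1) P1)"
    by blast
  have al0: "alpha (Tsh (M0sh m y) k l x P) (Tsh Mz1 k1 l1 x1 P1)" using h1 al by (rule alpha.a_trans)
  define BA where "BA = Par (Res l (Pre (POut (Ch k) l) (Msh m y l p))) (Pre (PIn (Ch k) x) P)"
  define T1 where "T1 = Tsh Mz1 k1 l1 x1 P1"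
  obtain k2 where k2: "k2 \<notin> {c. Ch c \<in> fn BA} \<union> {c. Ch c \<in> fn T1} \<union> {c. Ch c \<in> fn Bx'} \<union> {k, k1, l1}"
    using fresh_exists[of "{c. Ch c \<in> fn BA} \<union> {c. Ch c \<in> fn T1} \<union> {c. Ch c \<in> fn Bx'} \<union> {k, k1, l1}"]
      finite_fnc by auto
  define l' where "l' = swp k k2 l"
  define MA where "MA = Pre (POut (Ch k2) l') (swapc k k2 (Msh m y l p))"
  obtain l2 where l2: "l2 \<notin> {c. Ch c \<in> fn MA} \<union> {c. Ch c \<in> fn T1} \<union> {c. Ch c \<in> fn Bx'} \<union> {k, k1, l1, k2, l'}"
    using fresh_exists[of "{c. Ch c \<in> fn MA} \<union> {c. Ch c \<in> fn T1} \<union> {c. Ch c \<in> fn Bx'} \<union> {k, k1, l1, k2, l'}"]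
      finite_fnc by auto
  define \<sigma> where "\<sigma> = (\<lambda>X. swapc l1 l2 (swapc k1 k2 X))"
  have k1T1: "Ch k1 \<notin> fn T1" unfolding T1_def by simp
  have l1T1: "Ch l1 \<notin> fn T1" unfolding T1_def using c1 by auto
  have "alpha T1 (swapc k1 k2 T1)" using k1T1 k2 by (intro alpha_fresh_swap) auto
  moreover have "alpha (swapc k1 k2 T1) (\<sigma> T1)" unfolding \<sigma>_def
    using l1T1 l2 k2 c1 by (intro alpha_fresh_swap) (auto simp: Ch_fn_swapc)
  ultimately have "alpha T1 (\<sigma> T1)" by (rule alpha.a_trans)
  moreover have "\<sigma> T1 = Tsh (\<sigma> Mz1) k2 l2 x1 (\<sigma> P1)"
    unfolding \<sigma>_def T1_def using k2 l2 c1 by simp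
  ultimately have al1: "alpha (Tsh (M0sh m y) k l x P) (Tsh (\<sigma> Mz1) k2 l2 x1 (\<sigma> P1))"
    using al0 T1_def alpha.a_trans by metis
  note TC0 = al1[unfolded Tsh_alpha_iff]
  have "alpha (M0sh (swp l' l2 (swp k k2 m)) y) (\<sigma> Mz1)" using TC0 by (simp add: l'_def)
  hence "isM0 (swp l' l2 (swp k k2 m)) (\<sigma> Mz1)" using alpha_isM0 unfolding isM0_def by blast
  then obtain y2 where sM: "\<sigma> Mz1 = M0sh (swp l' l2 (swp k k2 m)) y2" unfolding isM0_def by blast
  define MM where "MM = Msh (swp l' l2 (swp k k2 m)) y l2 (swapc_pre l' l2 (swapc_pre k k2 p))"
  have TCA: "alpha (Tsh (Msh m y l p) k l x P) (Tsh MM k2 l2 x1 (\<sigma> P1))"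
    unfolding Tsh_alpha_iff
  proof (intro conjI)
    show "k2 = k \<or> Ch k2 \<notin> fn (Par (Res l (Pre (POut (Ch k) l) (Msh m y l p))) (Pre (PIn (Ch k) x) P))"
      using k2 unfolding BA_def by blast
    show "l2 = swp k k2 l \<or> Ch l2 \<notin> fn (Pre (POut (Ch k2) (swp k k2 l)) (swapc k k2 (Msh m y l p)))"
      using l2 unfolding MA_def l'_def by blast
    show "k2 = swp (swp k k2 l) l2 k2" using TC0 by simp
    show "alpha (swapc (swp k k2 l) l2 (swapc k k2 (Msh m y l p))) MM"
      unfolding MM_def l'_def by (simp add: alpha.a_refl)
    show "alpha (Pre (PIn (Ch k2) x) (swapc k k2 P)) (Pre (PIn (Ch k2) x1) (\<sigma> P1))"
      using TC0 by simp
  qed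
  have c2: "k2 \<noteq> l2" "l2 \<notin> bnc (\<sigma> P1)" "Ch l2 \<notin> fn (Pre (PIn (Ch k2) x1) (\<sigma> P1))"
  proof -
    show "k2 \<noteq> l2" using l2 by auto
    show "l2 \<notin> bnc (\<sigma> P1)" unfolding \<sigma>_def using c1 k2 l2 by (auto simp: bnc_swapc swp_def split: if_splits)
    have "Pre (PIn (Ch k2) x1) (\<sigma> P1) = \<sigma> (Pre (PIn (Ch k1) x1) P1)" unfolding \<sigma>_def using k2 l2 by simp
    thus "Ch l2 \<notin> fn (Pre (PIn (Ch k2) x1) (\<sigma> P1))" unfolding \<sigma>_def using c1 k2 l2
      by (simp only: Ch_fn_swapc) simp
  qed
  define A' where "A' = Res k2 (Res l2 (Par MM (subst x1 l2 (\<sigma> P1))))"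
  have st: "step (Tsh (Msh m y l p) k l x P) ATau A'"
    unfolding A'_def using TCA T_replay[OF c2] by (rule step.s_alpha)
  define B1' where "B1' = Res k2 (Res l2 (Par (\<sigma> Mz1) (subst x1 l2 (\<sigma> P1))))"
  have "l2 \<notin> fo (\<sigma> P1)" using c2(3) fo_fn by auto
  hence S1: "S L A' B1'" unfolding A'_def B1'_def sM MM_def
    by (intro S.S_res S.S_prot S.S_par S.S_M S.S_refl) auto
  have "B1' = \<sigma> Bx'" unfolding B1'_def Bx' \<sigma>_def using k2 l2 c1 by (simp add: subst_swapc)
  moreover have "alpha (\<sigma> Bx') Bx'"
  proof -
    have "alpha Bx' (swapc k1 k2 Bx')" using k2 by (intro alpha_fresh_swap) (auto simp: Bx')
    moreover have "alpha (swapc k1 k2 Bx') (\<sigma> Bx')" unfolding \<sigma>_def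
      using k2 l2 c1 by (intro alpha_fresh_swap) (auto simp: Ch_fn_swapc Bx')
    ultimately show ?thesis by (meson alpha.a_sym alpha.a_trans)
  qed
  ultimately have "alpha B1' Bx'" by simp
  thus ?thesis using st S1 a by (blast intro: alpha.a_refl)
qed


lemma mem_swp_image[simp]: "(x \<in> swp u v ` A) = (swp u v x \<in> A)"
  by (simp add: mem_inv_image)

lemma S_ParE: "S L (Par X R) B \<Longrightarrow> B = Par X R \<or> (\<exists>Y W. B = Par Y W \<and> S L X Y \<and> S L R W)"
  by (erule S.cases) auto
lemma S_ResE: "S L (Res c X) B \<Longrightarrow> B = Res c X \<or> (\<exists>Y. B = Res c Y \<and> S (L - {c}) X Y) \<or>
   (\<exists>Y. B = Res c Y \<and> S (insert c L) X Y \<and> c \<notin> fo Y) \<or>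
   (\<exists>m y l p x P. Res c X = Tsh (Msh m y l p) c l x P \<and> B = Tsh (M0sh m y) c l x P)"
  by (erule S.cases) auto
lemma S_PreE: "S L (Pre q X) B \<Longrightarrow> B = Pre q X \<or> (\<exists>m y l p y'. Pre q X = Msh m y l p \<and> l \<in> L \<and> B = M0sh m y') \<or>
   (\<exists>n l p. Pre q X = Pre (PMatch (Ch n) (Ch l) p) PNil \<and> n \<noteq> l \<and> B = PNil)"
  by (erule S.cases) auto
lemma S_BangE: "S L (Bang X) B \<Longrightarrow> B = Bang X"
  by (erule S.cases) auto

lemma S_ParE2: "S L A (Par Y W) \<Longrightarrow> A = Par Y W \<or> (\<exists>X R. A = Par X R \<and> S L X Y \<and> S L R W)"
  by (erule S.cases) auto
lemma S_ResE2: "S L A (Res c Y) \<Longrightarrow> A = Res c Y \<or> (\<exists>X. A = Res c X \<and> S (L - {c}) X Y) \<or>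
   (\<exists>X. A = Res c X \<and> S (insert c L) X Y \<and> c \<notin> fo Y) \<or>
   (\<exists>m y l p x P. A = Tsh (Msh m y l p) c l x P \<and> Res c Y = Tsh (M0sh m y) c l x P)"
  by (erule S.cases) auto
lemma S_PreE2: "S L A (Pre q Y) \<Longrightarrow> A = Pre q Y \<or> (\<exists>m y l p y'. A = Msh m y l p \<and> l \<in> L \<and> Pre q Y = M0sh m y')"
  by (erule S.cases) auto
lemma S_BangE2: "S L A (Bang Y) \<Longrightarrow> A = Bang Y"
  by (erule S.cases) auto
lemma S_PNilE2: "S L A PNil \<Longrightarrow> A = PNil \<or> (\<exists>n l p. n \<noteq> l \<and> A = Pre (PMatch (Ch n) (Ch l) p) PNil)"
  by (erule S.cases) auto

lemma NoOutB_swapc: "NoOutB L Y \<Longrightarrow> NoOutB (swp u v ` L) (swapc u v Y)"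
  unfolding NoOutB_def by (auto simp: mem_fo_swapc)

lemma renA:
  assumes al: "alpha (Res c X1) (Res c' X)" and S: "S L' X1 Y1" and F: "finite F"
  obtains d where "d \<notin> F" "d \<noteq> c" "d \<noteq> c'" "Ch d \<notin> fn X1" "Ch d \<notin> fn Y1" "Ch d \<notin> fn X"
   "alpha (swapc c' d (swapc c d X1)) X"
   "S (swp c' d ` swp c d ` L') (swapc c' d (swapc c d X1)) (swapc c' d (swapc c d Y1))"
   "alpha (Res c Y1) (Res c' (swapc c' d (swapc c d Y1)))"
proof -
  obtain d where d: "d \<notin> F \<union> {c, c'} \<union> {e. Ch e \<in> fn X1} \<union> {e. Ch e \<in> fn Y1} \<union> {e. Ch e \<in> fn X}"
    using fresh_nat[of "F \<union> {c, c'} \<union> {e. Ch e \<in> fn X1} \<union> {e. Ch e \<in> fn Y1} \<union> {e. Ch e \<in> fn X}"] F finite_fnc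
    by auto
  from al have fr: "c' = c \<or> Ch c' \<notin> fn X1" and al1: "alpha (swapc c c' X1) X" by (simp_all add: alpha_Res_iff)
  have fnY: "fn Y1 \<subseteq> fn X1" using S by (rule S_fn)
  have "alpha (swapc c' d (swapc c d X1)) X"
  proof (cases "c' = c")
    case True thus ?thesis using al1 by simp
  next
    case False
    have e: "swapc c' d (swapc c d X1) = swapc c c' (swapc c' d X1)" using d False by (simp add: swapc_comm[of c' d c d])
    have "alpha X1 (swapc c' d X1)" using fr False d by (intro alpha_fresh_swap) auto
    hence "alpha (swapc c c' X1) (swapc c c' (swapc c' d X1))" by (rule alpha_swapc)
    thus ?thesis using e al1 by (metis alpha.a_sym alpha.a_trans)
  qed
  moreover have "alpha (Res c Y1) (Res c' (swapc c' d (swapc c d Y1)))"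
  proof (cases "c' = c")
    case True thus ?thesis by (simp add: alpha.a_refl)
  next
    case False
    have e: "swapc c' d (swapc c d Y1) = swapc c c' (swapc c' d Y1)" using d False by (simp add: swapc_comm[of c' d c d])
    have fr2: "Ch c' \<notin> fn Y1" using fr False fnY by auto
    have "alpha Y1 (swapc c' d Y1)" using fr2 d by (intro alpha_fresh_swap) auto
    hence "alpha (swapc c c' Y1) (swapc c' d (swapc c d Y1))" unfolding e by (rule alpha_swapc)
    thus ?thesis using fr2 by (simp add: alpha_Res_iff)
  qed
  moreover have "S (swp c' d ` swp c d ` L') (swapc c' d (swapc c d X1)) (swapc c' d (swapc c d Y1))"
    using S_swapc[OF S_swapc[OF S]] .
  ultimately show ?thesis using that d by blast
qed

lemma reflA: "alpha A1 A \<Longrightarrow> step A a A' \<Longrightarrow> \<exists>B' A1' B1'. step A1 a B' \<and> alpha A' A1' \<and> S L A1' B1' \<and> alpha B1' B'"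
  by (blast intro: step.s_alpha alpha.a_refl S.S_refl)


lemma bno_abn: "l \<in> bno a \<Longrightarrow> Ch l \<in> abn a"
  by (cases a) auto
lemma bno_aobj: "bno a \<subseteq> aobj a"
  by (cases a) auto
lemma aobj_an: "l \<in> aobj a \<Longrightarrow> Ch l \<in> an a"
  by (cases a) auto

lemma NoOutB_Par: "NoOutB L (Par Y W) \<Longrightarrow> NoOutB L Y \<and> NoOutB L W"
  unfolding NoOutB_def by auto
lemma CondA_Par: "CondA L (Par X R) a \<Longrightarrow> CondA L X a \<and> CondA L R a"
  unfolding CondA_def by auto
lemma CondA_out[simp]: "CondA L A (AOut k n)" "CondA L A (ABOut k n)" "CondA L A ATau"
  unfolding CondA_def by auto

lemma finite_aobj: "finite (aobj a)" by (cases a) auto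
lemma finite_an_set: "finite {e. Ch e \<in> an a}" by (cases a) auto

lemma simA: "step A a A' \<Longrightarrow> alpha A1 A \<Longrightarrow> S L A1 B1 \<Longrightarrow> NoOutB L B1 \<Longrightarrow> CondA L A1 a \<Longrightarrow> finite L \<Longrightarrow>
  \<exists>B' A1' B1'. step B1 a B' \<and> alpha A' A1' \<and> S (L - bno a) A1' B1' \<and> alpha B1' B'"
proof (induction arbitrary: A1 B1 L rule: step.induct)
  case (s_out k l P)
  from s_out.prems(1) obtain q X1 where A1: "A1 = Pre q X1" "rebind 0 q = POut (Ch k) l" by (auto elim!: alpha_PreE2)
  from S_PreE[OF s_out.prems(2)[unfolded A1(1)]] A1 have "B1 = A1" by auto
  thus ?case using reflA[OF s_out.prems(1) step.s_out] by simp
next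
  case (s_in l P k x)
  from s_in.prems(1) obtain q X1 where A1: "A1 = Pre q X1" "rebind 0 q = PIn (Ch k) 0" by (auto elim!: alpha_PreE2)
  from S_PreE[OF s_in.prems(2)[unfolded A1(1)]] A1 show ?case
  proof (elim disjE exE conjE)
    assume "B1 = Pre q X1" thus ?case using reflA[OF s_in.prems(1) step.s_in[OF s_in.hyps]] A1 by simp
  next
    fix m y0 l0 p0 y' assume h: "Pre q X1 = Msh m y0 l0 p0" "l0 \<in> L" "B1 = M0sh m y'"
    have "isM m l0 A1" using h A1 unfolding isM_def by auto
    hence "isM m l0 (Pre (PIn (Ch k) x) P)" using alpha_isM[OF s_in.prems(1)] by simp
    then obtain p'' where P: "P = Pre (PMatch (Var x) (Ch l0) p'') PNil" and km: "k = m" unfolding isM_def by auto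
    have "l \<noteq> l0" using s_in.prems(4) h A1 unfolding CondA_def by auto
    have st: "step B1 (AIn k l) PNil" using h km step.s_in[of l PNil m y'] by simp
    have "S (L - bno (AIn k l)) (subst x l P) PNil" unfolding P using \<open>l \<noteq> l0\<close> by (simp add: S.S_dead)
    thus ?case using st by (blast intro: alpha.a_refl)
  next
    fix n l0 p assume "Pre q X1 = Pre (PMatch (Ch n) (Ch l0) p) PNil" thus ?case using A1 by auto
  qed
next
  case (s_match p P a P' c)
  from s_match.prems(1) obtain q X1 where A1: "A1 = Pre q X1" "rebind 0 q = PMatch c c (rebind 0 p)"
    by (auto elim!: alpha_PreE2)
  from S_PreE[OF s_match.prems(2)[unfolded A1(1)]] A1 have "B1 = A1" by auto
  thus ?case using reflA[OF s_match.prems(1) step.s_match[OF s_match.hyps(1)]] by simp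
next
  case (s_res P a P' c')
  from s_res.prems(1) obtain c X1 where A1: "A1 = Res c X1" by (auto elim!: alpha_ResE2)
  have stA: "step (Res c' P) a (Res c' P')" using s_res.hyps by (rule step.s_res)
  have fnA: "fn A1 = fn (Res c' P)" using alpha_fn[OF s_res.prems(1)] .
  from S_ResE[OF s_res.prems(2)[unfolded A1]] show ?case
  proof (elim disjE exE conjE)
    assume "B1 = Res c X1" thus ?case using reflA[OF s_res.prems(1) stA] A1 by simp
  next
    fix m y l p x Q assume T: "Res c X1 = Tsh (Msh m y l p) c l x Q" "B1 = Tsh (M0sh m y) c l x Q"
    from TcaseA[OF s_res.prems(1)[unfolded A1 T(1)] stA] T(2) show ?case by blast
  next
    fix Y1 assume B1: "B1 = Res c Y1" and S1: "S (L - {c}) X1 Y1"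
    have fin: "finite (L \<union> aobj a \<union> {e. Ch e \<in> an a})" using s_res.prems(5) finite_aobj finite_an_set by auto
    obtain d where d: "d \<notin> L \<union> aobj a \<union> {e. Ch e \<in> an a}" "d \<noteq> c" "d \<noteq> c'" "Ch d \<notin> fn X1" "Ch d \<notin> fn Y1" "Ch d \<notin> fn P"
      and al: "alpha (swapc c' d (swapc c d X1)) P"
      and S2: "S (swp c' d ` swp c d ` (L - {c})) (swapc c' d (swapc c d X1)) (swapc c' d (swapc c d Y1))"
      and alB: "alpha (Res c Y1) (Res c' (swapc c' d (swapc c d Y1)))"
      by (rule renA[OF s_res.prems(1)[unfolded A1] S1 fin])
    define L' where "L' = swp c' d ` swp c d ` (L - {c})"
    have NO: "NoOutB L' (swapc c' d (swapc c d Y1))" unfolding L'_def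
      using s_res.prems(3) B1 by (intro NoOutB_swapc) (auto simp: NoOutB_def)
    have fnP: "fn (swapc c' d (swapc c d X1)) = fn P" using alpha_fn[OF al] .
    have CA: "CondA L' (swapc c' d (swapc c d X1)) a" unfolding CondA_def
    proof (intro allI impI)
      fix k n assume an: "a = AIn k n" and nf: "Ch n \<in> fn (swapc c' d (swapc c d X1))"
      have n1: "Ch n \<in> fn P" using nf fnP by simp
      have n2: "n \<noteq> c'" using s_res.hyps(2) an by auto
      have n3: "n \<noteq> d" using n1 d by auto
      have "Ch n \<in> fn A1" using fnA n1 n2 by simp
      hence n4: "n \<noteq> c" "n \<notin> L" using s_res.prems(4) an A1 unfolding CondA_def by auto
      show "n \<notin> L'" unfolding L'_def using n2 n3 n4 by simp
    qed
    have fL: "finite L'" unfolding L'_def using s_res.prems(5) by simp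
    from s_res.IH[OF al S2[folded L'_def] NO CA fL] obtain B'' A1'' B1'' where
      IH: "step (swapc c' d (swapc c d Y1)) a B''" "alpha P' A1''" "S (L' - bno a) A1'' B1''" "alpha B1'' B''"
      by blast
    have stB: "step B1 a (Res c' B'')" unfolding B1 using alB step.s_res[OF IH(1) s_res.hyps(2)] by (rule step.s_alpha)
    have fnA1: "fn A1'' \<subseteq> fn P \<union> Ch ` aobj a" using alpha_fn[OF IH(2)] step_fn[OF s_res.hyps(1)] by simp
    have "S ((L - bno a) - {c'}) A1'' B1''"
    proof (rule S_cong[OF IH(3)], intro ballI impI)
      fix l assume l: "l \<in> L' - bno a" and lf: "Ch l \<in> fn A1''"
      have "l \<noteq> d" using lf fnA1 d by auto
      thus "l \<in> L - bno a - {c'}" using l d unfolding L'_def by (auto simp: swp_def split: if_splits)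
    qed
    hence "S (L - bno a) (Res c' A1'') (Res c' B1'')" by (rule S.S_res)
    thus ?case using stB IH(2,4) by (blast intro: alpha.a_res)
  next
    fix Y1 assume B1: "B1 = Res c Y1" and S1: "S (insert c L) X1 Y1" and fo1: "c \<notin> fo Y1"
    have fin: "finite (L \<union> aobj a \<union> {e. Ch e \<in> an a})" using s_res.prems(5) finite_aobj finite_an_set by auto
    obtain d where d: "d \<notin> L \<union> aobj a \<union> {e. Ch e \<in> an a}" "d \<noteq> c" "d \<noteq> c'" "Ch d \<notin> fn X1" "Ch d \<notin> fn Y1" "Ch d \<notin> fn P"
      and al: "alpha (swapc c' d (swapc c d X1)) P"
      and S2: "S (swp c' d ` swp c d ` (insert c L)) (swapc c' d (swapc c d X1)) (swapc c' d (swapc c d Y1))"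
      and alB: "alpha (Res c Y1) (Res c' (swapc c' d (swapc c d Y1)))"
      by (rule renA[OF s_res.prems(1)[unfolded A1] S1 fin])
    define L' where "L' = swp c' d ` swp c d ` (insert c L)"
    have NO: "NoOutB L' (swapc c' d (swapc c d Y1))" unfolding L'_def
      using s_res.prems(3) B1 fo1 by (intro NoOutB_swapc) (auto simp: NoOutB_def)
    have fnP: "fn (swapc c' d (swapc c d X1)) = fn P" using alpha_fn[OF al] .
    have CA: "CondA L' (swapc c' d (swapc c d X1)) a" unfolding CondA_def
    proof (intro allI impI)
      fix k n assume an: "a = AIn k n" and nf: "Ch n \<in> fn (swapc c' d (swapc c d X1))"
      have n1: "Ch n \<in> fn P" using nf fnP by simp
      have n2: "n \<noteq> c'" using s_res.hyps(2) an by auto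
      have n3: "n \<noteq> d" using n1 d by auto
      have "Ch n \<in> fn A1" using fnA n1 n2 by simp
      hence n4: "n \<noteq> c" "n \<notin> L" using s_res.prems(4) an A1 unfolding CondA_def by auto
      show "n \<notin> L'" unfolding L'_def using n2 n3 n4 by simp
    qed
    have fL: "finite L'" unfolding L'_def using s_res.prems(5) by simp
    from s_res.IH[OF al S2[folded L'_def] NO CA fL] obtain B'' A1'' B1'' where
      IH: "step (swapc c' d (swapc c d Y1)) a B''" "alpha P' A1''" "S (L' - bno a) A1'' B1''" "alpha B1'' B''"
      by blast
    have stB: "step B1 a (Res c' B'')" unfolding B1 using alB step.s_res[OF IH(1) s_res.hyps(2)] by (rule step.s_alpha)
    have fnA1: "fn A1'' \<subseteq> fn P \<union> Ch ` aobj a" using alpha_fn[OF IH(2)] step_fn[OF s_res.hyps(1)] by simp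
    have "S (insert c' (L - bno a)) A1'' B1''"
    proof (rule S_cong[OF IH(3)], intro ballI impI)
      fix l assume l: "l \<in> L' - bno a" and lf: "Ch l \<in> fn A1''"
      have "l \<noteq> d" using lf fnA1 d by auto
      thus "l \<in> insert c' (L - bno a)" using l d unfolding L'_def by (auto simp: swp_def split: if_splits)
    qed
    moreover have "c' \<notin> fo B1''"
    proof
      assume "c' \<in> fo B1''"
      hence "c' \<in> fo B''" using alpha_fo[OF IH(4)] by simp
      hence "c' \<in> fo (swapc c' d (swapc c d Y1)) \<union> aobj a" using step_fo[OF IH(1)] by auto
      moreover have "c' \<notin> aobj a" using s_res.hyps(2) aobj_an by blast
      ultimately have "c' \<in> fo (swapc c' d (swapc c d Y1))" by simp
      thus False using fo1 d by (simp add: mem_fo_swapc)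
    qed
    ultimately have "S (L - bno a) (Res c' A1'') (Res c' B1'')" by (rule S.S_prot)
    thus ?case using stB IH(2,4) by (blast intro: alpha.a_res)
  qed
next
  case (s_open P k c' Q)
  from s_open.prems(1) obtain c X1 where A1: "A1 = Res c X1" by (auto elim!: alpha_ResE2)
  have stA: "step (Res c' P) (ABOut k c') Q" using s_open.hyps by (rule step.s_open)
  from S_ResE[OF s_open.prems(2)[unfolded A1]] show ?case
  proof (elim disjE exE conjE)
    assume "B1 = Res c X1" thus ?case using reflA[OF s_open.prems(1) stA] A1 by simp
  next
    fix m y l p x Q0 assume T: "Res c X1 = Tsh (Msh m y l p) c l x Q0" "B1 = Tsh (M0sh m y) c l x Q0"
    from TcaseA[OF s_open.prems(1)[unfolded A1 T(1)] stA] show ?case by blast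
  next
    fix Y1 assume B1: "B1 = Res c Y1" and S1: "S (L - {c}) X1 Y1"
    have fin: "finite (L \<union> {k, c'})" using s_open.prems(5) by auto
    obtain d where d: "d \<notin> L \<union> {k, c'}" "d \<noteq> c" "d \<noteq> c'" "Ch d \<notin> fn X1" "Ch d \<notin> fn Y1" "Ch d \<notin> fn P"
      and al: "alpha (swapc c' d (swapc c d X1)) P"
      and S2: "S (swp c' d ` swp c d ` (L - {c})) (swapc c' d (swapc c d X1)) (swapc c' d (swapc c d Y1))"
      and alB: "alpha (Res c Y1) (Res c' (swapc c' d (swapc c d Y1)))"
      by (rule renA[OF s_open.prems(1)[unfolded A1] S1 fin])
    define L' where "L' = swp c' d ` swp c d ` (L - {c})"
    have NO: "NoOutB L' (swapc c' d (swapc c d Y1))" unfolding L'_def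
      using s_open.prems(3) B1 by (intro NoOutB_swapc) (auto simp: NoOutB_def)
    have fL: "finite L'" unfolding L'_def using s_open.prems(5) by simp
    from s_open.IH[OF al S2[folded L'_def] NO CondA_out(1) fL] obtain B'' A1'' B1'' where
      IH: "step (swapc c' d (swapc c d Y1)) (AOut k c') B''" "alpha Q A1''" "S L' A1'' B1''" "alpha B1'' B''"
      by auto
    have stB: "step B1 (ABOut k c') B''" unfolding B1 using alB step.s_open[OF IH(1) s_open.hyps(2)] by (rule step.s_alpha)
    have fnA1: "fn A1'' \<subseteq> fn P \<union> {Ch c'}" using alpha_fn[OF IH(2)] step_fn[OF s_open.hyps(1)] by simp
    have "S (L - bno (ABOut k c')) A1'' B1''"
    proof (rule S_cong[OF IH(3)], intro ballI impI)
      fix l assume l: "l \<in> L'" and lf: "Ch l \<in> fn A1''"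
      have "l \<noteq> d" using lf fnA1 d by auto
      thus "l \<in> L - bno (ABOut k c')" using l d unfolding L'_def by (auto simp: swp_def split: if_splits)
    qed
    thus ?case using stB IH(2,4) by blast
  next
    fix Y1 assume B1: "B1 = Res c Y1" and S1: "S (insert c L) X1 Y1" and fo1: "c \<notin> fo Y1"
    have fin: "finite (L \<union> {k, c'})" using s_open.prems(5) by auto
    obtain d where d: "d \<notin> L \<union> {k, c'}" "d \<noteq> c" "d \<noteq> c'" "Ch d \<notin> fn X1" "Ch d \<notin> fn Y1" "Ch d \<notin> fn P"
      and al: "alpha (swapc c' d (swapc c d X1)) P"
      and S2: "S (swp c' d ` swp c d ` (insert c L)) (swapc c' d (swapc c d X1)) (swapc c' d (swapc c d Y1))"
      and alB: "alpha (Res c Y1) (Res c' (swapc c' d (swapc c d Y1)))"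
      by (rule renA[OF s_open.prems(1)[unfolded A1] S1 fin])
    define L' where "L' = swp c' d ` swp c d ` (insert c L)"
    have NO: "NoOutB L' (swapc c' d (swapc c d Y1))" unfolding L'_def
      using s_open.prems(3) B1 fo1 by (intro NoOutB_swapc) (auto simp: NoOutB_def)
    have fL: "finite L'" unfolding L'_def using s_open.prems(5) by simp
    from s_open.IH[OF al S2[folded L'_def] NO CondA_out(1) fL] obtain B'' where
      IH: "step (swapc c' d (swapc c d Y1)) (AOut k c') B''" by auto
    have "c' \<in> fo (swapc c' d (swapc c d Y1))" using step_out_fo[OF IH refl] .
    thus ?case using fo1 d by (simp add: mem_fo_swapc)
  qed
next
  case (s_par_l P a Q R)
  from s_par_l.prems(1) obtain X1 R1 where A1: "A1 = Par X1 R1" "alpha X1 P" "alpha R1 R" by (auto elim!: alpha_ParE2)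
  have stA: "step (Par P R) a (Par Q R)" using s_par_l.hyps by (rule step.s_par_l)
  from S_ParE[OF s_par_l.prems(2)[unfolded A1(1)]] show ?case
  proof (elim disjE exE conjE)
    assume "B1 = Par X1 R1" thus ?case using reflA[OF s_par_l.prems(1) stA] A1 by simp
  next
    fix Y1 W1 assume B1: "B1 = Par Y1 W1" and S1: "S L X1 Y1" and S2: "S L R1 W1"
    have NO: "NoOutB L Y1" using s_par_l.prems(3) B1 NoOutB_Par by blast
    have CA: "CondA L X1 a" using s_par_l.prems(4) A1 CondA_Par by blast
    from s_par_l.IH[OF A1(2) S1 NO CA s_par_l.prems(5)] obtain B'' A1'' B1'' where
      IH: "step Y1 a B''" "alpha Q A1''" "S (L - bno a) A1'' B1''" "alpha B1'' B''" by blast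
    have fR: "fn W1 \<subseteq> fn R" using S_fn[OF S2] alpha_fn[OF A1(3)] by simp
    have stB: "step B1 a (Par B'' W1)" unfolding B1 using IH(1) s_par_l.hyps(2) fR by (intro step.s_par_l) auto
    have "S (L - bno a) R1 W1"
    proof (rule S_cong[OF S2], intro ballI impI)
      fix l assume "l \<in> L" "Ch l \<in> fn R1"
      thus "l \<in> L - bno a" using s_par_l.hyps(2) alpha_fn[OF A1(3)] bno_abn by blast
    qed
    hence "S (L - bno a) (Par A1'' R1) (Par B1'' W1)" using IH(3) by (rule S.S_par[rotated])
    moreover have "alpha (Par Q R) (Par A1'' R1)" using IH(2) alpha.a_sym[OF A1(3)] by (simp add: alpha_Par_iff)
    moreover have "alpha (Par B1'' W1) (Par B'' W1)" using IH(4) by (simp add: alpha_Par_iff alpha.a_refl)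
    ultimately show ?case using stB by blast
  qed
next
  case (s_par_r P a Q R)
  from s_par_r.prems(1) obtain R1 X1 where A1: "A1 = Par R1 X1" "alpha X1 P" "alpha R1 R" by (auto elim!: alpha_ParE2)
  have stA: "step (Par R P) a (Par R Q)" using s_par_r.hyps by (rule step.s_par_r)
  from S_ParE[OF s_par_r.prems(2)[unfolded A1(1)]] show ?case
  proof (elim disjE exE conjE)
    assume "B1 = Par R1 X1" thus ?case using reflA[OF s_par_r.prems(1) stA] A1 by simp
  next
    fix W1 Y1 assume B1: "B1 = Par W1 Y1" and S2: "S L R1 W1" and S1: "S L X1 Y1"
    have NO: "NoOutB L Y1" using s_par_r.prems(3) B1 NoOutB_Par by blast
    have CA: "CondA L X1 a" using s_par_r.prems(4) A1 CondA_Par by blast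
    from s_par_r.IH[OF A1(2) S1 NO CA s_par_r.prems(5)] obtain B'' A1'' B1'' where
      IH: "step Y1 a B''" "alpha Q A1''" "S (L - bno a) A1'' B1''" "alpha B1'' B''" by blast
    have fR: "fn W1 \<subseteq> fn R" using S_fn[OF S2] alpha_fn[OF A1(3)] by simp
    have stB: "step B1 a (Par W1 B'')" unfolding B1 using IH(1) s_par_r.hyps(2) fR by (intro step.s_par_r) auto
    have "S (L - bno a) R1 W1"
    proof (rule S_cong[OF S2], intro ballI impI)
      fix l assume "l \<in> L" "Ch l \<in> fn R1"
      thus "l \<in> L - bno a" using s_par_r.hyps(2) alpha_fn[OF A1(3)] bno_abn by blast
    qed
    hence "S (L - bno a) (Par R1 A1'') (Par W1 B1'')" using IH(3) by (rule S.S_par)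
    moreover have "alpha (Par R Q) (Par R1 A1'')" using IH(2) alpha.a_sym[OF A1(3)] by (simp add: alpha_Par_iff)
    moreover have "alpha (Par W1 B1'') (Par W1 B'')" using IH(4) by (simp add: alpha_Par_iff alpha.a_refl)
    ultimately show ?case using stB by blast
  qed
next
  case (s_comm_l P k l P' Q Q')
  from s_comm_l.prems(1) obtain X1 R1 where A1: "A1 = Par X1 R1" "alpha X1 P" "alpha R1 Q" by (auto elim!: alpha_ParE2)
  have stA: "step (Par P Q) ATau (Par P' Q')" using s_comm_l.hyps by (rule step.s_comm_l)
  from S_ParE[OF s_comm_l.prems(2)[unfolded A1(1)]] show ?case
  proof (elim disjE exE conjE)
    assume "B1 = Par X1 R1" thus ?case using reflA[OF s_comm_l.prems(1) stA] A1 by simp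
  next
    fix Y1 W1 assume B1: "B1 = Par Y1 W1" and S1: "S L X1 Y1" and S2: "S L R1 W1"
    have NO1: "NoOutB L Y1" and NO2: "NoOutB L W1" using s_comm_l.prems(3) B1 NoOutB_Par by blast+
    from s_comm_l.IH(1)[OF A1(2) S1 NO1 CondA_out(1) s_comm_l.prems(5)] obtain B1x A1x B1x' where
      IH1: "step Y1 (AOut k l) B1x" "alpha P' A1x" "S L A1x B1x'" "alpha B1x' B1x" by auto
    have "l \<notin> L" using step_out_fo[OF IH1(1) refl] NO1 unfolding NoOutB_def by blast
    hence CA: "CondA L R1 (AIn k l)" unfolding CondA_def by auto
    from s_comm_l.IH(2)[OF A1(3) S2 NO2 CA s_comm_l.prems(5)] obtain B2x A2x B2x' where
      IH2: "step W1 (AIn k l) B2x" "alpha Q' A2x" "S L A2x B2x'" "alpha B2x' B2x" by auto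
    have stB: "step B1 ATau (Par B1x B2x)" unfolding B1 using IH1(1) IH2(1) by (rule step.s_comm_l)
    have "S (L - bno ATau) (Par A1x A2x) (Par B1x' B2x')" using IH1(3) IH2(3) by (simp add: S.S_par)
    moreover have "alpha (Par P' Q') (Par A1x A2x)" using IH1(2) IH2(2) by (simp add: alpha_Par_iff)
    moreover have "alpha (Par B1x' B2x') (Par B1x B2x)" using IH1(4) IH2(4) by (simp add: alpha_Par_iff)
    ultimately show ?case using stB by blast
  qed
next
  case (s_comm_r P k l P' Q Q')
  from s_comm_r.prems(1) obtain R1 X1 where A1: "A1 = Par R1 X1" "alpha X1 P" "alpha R1 Q" by (auto elim!: alpha_ParE2)
  have stA: "step (Par Q P) ATau (Par Q' P')" using s_comm_r.hyps by (rule step.s_comm_r)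
  from S_ParE[OF s_comm_r.prems(2)[unfolded A1(1)]] show ?case
  proof (elim disjE exE conjE)
    assume "B1 = Par R1 X1" thus ?case using reflA[OF s_comm_r.prems(1) stA] A1 by simp
  next
    fix W1 Y1 assume B1: "B1 = Par W1 Y1" and S2: "S L R1 W1" and S1: "S L X1 Y1"
    have NO1: "NoOutB L Y1" and NO2: "NoOutB L W1" using s_comm_r.prems(3) B1 NoOutB_Par by blast+
    from s_comm_r.IH(1)[OF A1(2) S1 NO1 CondA_out(1) s_comm_r.prems(5)] obtain B1x A1x B1x' where
      IH1: "step Y1 (AOut k l) B1x" "alpha P' A1x" "S L A1x B1x'" "alpha B1x' B1x" by auto
    have "l \<notin> L" using step_out_fo[OF IH1(1) refl] NO1 unfolding NoOutB_def by blast
    hence CA: "CondA L R1 (AIn k l)" unfolding CondA_def by auto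
    from s_comm_r.IH(2)[OF A1(3) S2 NO2 CA s_comm_r.prems(5)] obtain B2x A2x B2x' where
      IH2: "step W1 (AIn k l) B2x" "alpha Q' A2x" "S L A2x B2x'" "alpha B2x' B2x" by auto
    have stB: "step B1 ATau (Par B2x B1x)" unfolding B1 using IH1(1) IH2(1) by (rule step.s_comm_r)
    have "S (L - bno ATau) (Par A2x A1x) (Par B2x' B1x')" using IH1(3) IH2(3) by (simp add: S.S_par)
    moreover have "alpha (Par Q' P') (Par A2x A1x)" using IH1(2) IH2(2) by (simp add: alpha_Par_iff)
    moreover have "alpha (Par B2x' B1x') (Par B2x B1x)" using IH1(4) IH2(4) by (simp add: alpha_Par_iff)
    ultimately show ?case using stB by blast
  qed
next
  case (s_close_l P k l P' Q Q')
  from s_close_l.prems(1) obtain X1 R1 where A1: "A1 = Par X1 R1" "alpha X1 P" "alpha R1 Q" by (auto elim!: alpha_ParE2)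
  have stA: "step (Par P Q) ATau (Res l (Par P' Q'))" using s_close_l.hyps by (rule step.s_close_l)
  from S_ParE[OF s_close_l.prems(2)[unfolded A1(1)]] show ?case
  proof (elim disjE exE conjE)
    assume "B1 = Par X1 R1" thus ?case using reflA[OF s_close_l.prems(1) stA] A1 by simp
  next
    fix Y1 W1 assume B1: "B1 = Par Y1 W1" and S1: "S L X1 Y1" and S2: "S L R1 W1"
    have NO1: "NoOutB L Y1" and NO2: "NoOutB L W1" using s_close_l.prems(3) B1 NoOutB_Par by blast+
    from s_close_l.IH(1)[OF A1(2) S1 NO1 CondA_out(2) s_close_l.prems(5)] obtain B1x A1x B1x' where
      IH1: "step Y1 (ABOut k l) B1x" "alpha P' A1x" "S (L - {l}) A1x B1x'" "alpha B1x' B1x" by auto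
    have fnR: "fn R1 = fn Q" using alpha_fn[OF A1(3)] .
    have S2': "S (L - {l}) R1 W1" using S2 s_close_l.hyps(3) fnR by (intro S_cong[OF S2]) auto
    have NO2': "NoOutB (L - {l}) W1" using NO2 unfolding NoOutB_def by auto
    have CA: "CondA (L - {l}) R1 (AIn k l)" unfolding CondA_def by auto
    from s_close_l.IH(2)[OF A1(3) S2' NO2' CA] s_close_l.prems(5) obtain B2x A2x B2x' where
      IH2: "step W1 (AIn k l) B2x" "alpha Q' A2x" "S (L - {l}) A2x B2x'" "alpha B2x' B2x" by auto
    have "Ch l \<notin> fn W1" using S_fn[OF S2] fnR s_close_l.hyps(3) by auto
    hence stB: "step B1 ATau (Res l (Par B1x B2x))" unfolding B1 using IH1(1) IH2(1) by (intro step.s_close_l)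
    have "S (L - bno ATau) (Res l (Par A1x A2x)) (Res l (Par B1x' B2x'))" using IH1(3) IH2(3) by (simp add: S.S_par S.S_res)
    moreover have "alpha (Res l (Par P' Q')) (Res l (Par A1x A2x))" using IH1(2) IH2(2) by (simp add: alpha_Par_iff alpha.a_res)
    moreover have "alpha (Res l (Par B1x' B2x')) (Res l (Par B1x B2x))" using IH1(4) IH2(4) by (simp add: alpha_Par_iff alpha.a_res)
    ultimately show ?case using stB by blast
  qed
next
  case (s_close_r P k l P' Q Q')
  from s_close_r.prems(1) obtain R1 X1 where A1: "A1 = Par R1 X1" "alpha X1 P" "alpha R1 Q" by (auto elim!: alpha_ParE2)
  have stA: "step (Par Q P) ATau (Res l (Par Q' P'))" using s_close_r.hyps by (rule step.s_close_r)
  from S_ParE[OF s_close_r.prems(2)[unfolded A1(1)]] show ?case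
  proof (elim disjE exE conjE)
    assume "B1 = Par R1 X1" thus ?case using reflA[OF s_close_r.prems(1) stA] A1 by simp
  next
    fix W1 Y1 assume B1: "B1 = Par W1 Y1" and S2: "S L R1 W1" and S1: "S L X1 Y1"
    have NO1: "NoOutB L Y1" and NO2: "NoOutB L W1" using s_close_r.prems(3) B1 NoOutB_Par by blast+
    from s_close_r.IH(1)[OF A1(2) S1 NO1 CondA_out(2) s_close_r.prems(5)] obtain B1x A1x B1x' where
      IH1: "step Y1 (ABOut k l) B1x" "alpha P' A1x" "S (L - {l}) A1x B1x'" "alpha B1x' B1x" by auto
    have fnR: "fn R1 = fn Q" using alpha_fn[OF A1(3)] .
    have S2': "S (L - {l}) R1 W1" using S2 s_close_r.hyps(3) fnR by (intro S_cong[OF S2]) auto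
    have NO2': "NoOutB (L - {l}) W1" using NO2 unfolding NoOutB_def by auto
    have CA: "CondA (L - {l}) R1 (AIn k l)" unfolding CondA_def by auto
    from s_close_r.IH(2)[OF A1(3) S2' NO2' CA] s_close_r.prems(5) obtain B2x A2x B2x' where
      IH2: "step W1 (AIn k l) B2x" "alpha Q' A2x" "S (L - {l}) A2x B2x'" "alpha B2x' B2x" by auto
    have "Ch l \<notin> fn W1" using S_fn[OF S2] fnR s_close_r.hyps(3) by auto
    hence stB: "step B1 ATau (Res l (Par B2x B1x))" unfolding B1 using IH1(1) IH2(1) by (intro step.s_close_r)
    have "S (L - bno ATau) (Res l (Par A2x A1x)) (Res l (Par B2x' B1x'))" using IH1(3) IH2(3) by (simp add: S.S_par S.S_res)
    moreover have "alpha (Res l (Par Q' P')) (Res l (Par A2x A1x))" using IH1(2) IH2(2) by (simp add: alpha_Par_iff alpha.a_res)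
    moreover have "alpha (Res l (Par B2x' B1x')) (Res l (Par B2x B1x))" using IH1(4) IH2(4) by (simp add: alpha_Par_iff alpha.a_res)
    ultimately show ?case using stB by blast
  qed
next
  case (s_rep_act P a P')
  from s_rep_act.prems(1) obtain X1 where "A1 = Bang X1" by (auto elim!: alpha_BangE2)
  hence "B1 = A1" using S_BangE s_rep_act.prems(2) by simp
  thus ?case using reflA[OF s_rep_act.prems(1) step.s_rep_act[OF s_rep_act.hyps(1)]] by simp
next
  case (s_rep_comm P k l P' P'')
  from s_rep_comm.prems(1) obtain X1 where "A1 = Bang X1" by (auto elim!: alpha_BangE2)
  hence "B1 = A1" using S_BangE s_rep_comm.prems(2) by simp
  thus ?case using reflA[OF s_rep_comm.prems(1) step.s_rep_comm[OF s_rep_comm.hyps(1,2)]] by simp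
next
  case (s_rep_close P k l P' P'')
  from s_rep_close.prems(1) obtain X1 where "A1 = Bang X1" by (auto elim!: alpha_BangE2)
  hence "B1 = A1" using S_BangE s_rep_close.prems(2) by simp
  thus ?case using reflA[OF s_rep_close.prems(1) step.s_rep_close[OF s_rep_close.hyps(1,2,3)]] by simp
next
  case (s_alpha P P' a Q)
  show ?case using s_alpha.IH[OF alpha.a_trans[OF s_alpha.prems(1) s_alpha.hyps(1)] s_alpha.prems(2-5)] .
qed


fun pch :: "(chan \<times> chan) list \<Rightarrow> chan \<Rightarrow> chan" where
  "pch [] c = c"
| "pch (q#ps) c = swp (fst q) (snd q) (pch ps c)"

fun permc :: "(chan \<times> chan) list \<Rightarrow> proc \<Rightarrow> proc" where
  "permc [] P = P"
| "permc (q#ps) P = swapc (fst q) (snd q) (permc ps P)"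

fun perma :: "(chan \<times> chan) list \<Rightarrow> act \<Rightarrow> act" where
  "perma [] a = a"
| "perma (q#ps) a = swapa (fst q) (snd q) (perma ps a)"

fun pnm :: "(chan \<times> chan) list \<Rightarrow> nm \<Rightarrow> nm" where
  "pnm [] n = n"
| "pnm (q#ps) n = swapc_nm (fst q) (snd q) (pnm ps n)"

fun ppre :: "(chan \<times> chan) list \<Rightarrow> prefix \<Rightarrow> prefix" where
  "ppre [] p = p"
| "ppre (q#ps) p = swapc_pre (fst q) (snd q) (ppre ps p)"

lemma pch_inj[simp]: "(pch ps a = pch ps b) = (a = b)"
  by (induction ps) auto

lemma pnm_Ch[simp]: "pnm ps (Ch c) = Ch (pch ps c)"
  by (induction ps) auto
lemma pnm_Var[simp]: "pnm ps (Var x) = Var x"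
  by (induction ps) auto

lemma ppre_simps[simp]:
  "ppre ps (POut a c) = POut (pnm ps a) (pch ps c)"
  "ppre ps (PIn a x) = PIn (pnm ps a) x"
  "ppre ps (PMatch a b p) = PMatch (pnm ps a) (pnm ps b) (ppre ps p)"
  by (induction ps) auto

lemma permc_simps[simp]:
  "permc ps PNil = PNil"
  "permc ps (Pre p P) = Pre (ppre ps p) (permc ps P)"
  "permc ps (Par P Q) = Par (permc ps P) (permc ps Q)"
  "permc ps (Res c P) = Res (pch ps c) (permc ps P)"
  "permc ps (Bang P) = Bang (permc ps P)"
  by (induction ps) auto

lemma perma_simps[simp]:
  "perma ps (AOut k l) = AOut (pch ps k) (pch ps l)"
  "perma ps (AIn k l) = AIn (pch ps k) (pch ps l)"
  "perma ps (ABOut k l) = ABOut (pch ps k) (pch ps l)"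
  "perma ps ATau = ATau"
  by (induction ps) auto

lemma permc_PNil_iff[simp]: "(permc ps P = PNil) = (P = PNil)"
  by (cases P) auto

lemma permc_subst: "permc ps (subst x l P) = subst x (pch ps l) (permc ps P)"
  by (induction ps) (auto simp: subst_swapc)

lemma step_permc: "step P a Q \<Longrightarrow> step (permc ps P) (perma ps a) (permc ps Q)"
  by (induction ps) (auto dest: step_swapc)

lemma alpha_permc: "alpha P Q \<Longrightarrow> alpha (permc ps P) (permc ps Q)"
  by (induction ps) (auto dest: alpha_swapc)

lemma Ch_fn_permc: "(Ch (pch ps c) \<in> fn (permc ps P)) = (Ch c \<in> fn P)"
  by (induction ps arbitrary: c) (auto simp: Ch_fn_swapc)

lemma Ch_an_perma: "(Ch (pch ps c) \<in> an (perma ps a)) = (Ch c \<in> an a)"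
proof (induction ps arbitrary: c)
  case (Cons q ps)
  have "Ch (swp (fst q) (snd q) (pch ps c)) \<in> an (swapa (fst q) (snd q) (perma ps a)) = (Ch (pch ps c) \<in> an (perma ps a))"
    by (metis an_swapa mem_swapc_nm_image swapc_nm.simps(1))
  thus ?case using Cons by simp
qed simp

lemma swapa_fresh: "Ch u \<notin> an b \<Longrightarrow> Ch v \<notin> an b \<Longrightarrow> swapa u v b = b"
  by (cases b) auto

lemma reflB: "alpha B1 (permc ps B) \<Longrightarrow> step B a B' \<Longrightarrow>
  \<exists>A' A1' B1'. step B1 (perma ps a) A' \<and> alpha A' A1' \<and> S L A1' B1' \<and> alpha B1' (permc ps B')"
  by (blast intro: step.s_alpha step_permc alpha.a_refl S.S_refl)

lemma renB:
  assumes al: "alpha (Res c1 Y1) (Res pc Z)" and F: "finite F"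
  obtains d where "d \<notin> F" "d \<noteq> c1" "d \<noteq> pc" "Ch d \<notin> fn Y1" "Ch d \<notin> fn Z"
   "alpha (swapc c1 d Y1) (swapc pc d Z)"
proof -
  obtain d where d: "d \<notin> F \<union> {c1, pc} \<union> {e. Ch e \<in> fn Y1} \<union> {e. Ch e \<in> fn Z}"
    using fresh_nat[of "F \<union> {c1, pc} \<union> {e. Ch e \<in> fn Y1} \<union> {e. Ch e \<in> fn Z}"] F finite_fnc by auto
  from al have fr: "pc = c1 \<or> Ch pc \<notin> fn Y1" and al1: "alpha (swapc c1 pc Y1) Z" by (simp_all add: alpha_Res_iff)
  have "alpha (swapc c1 d Y1) (swapc pc d (swapc c1 pc Y1))"
  proof (cases "pc = c1")
    case True thus ?thesis by (simp add: alpha.a_refl)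
  next
    case False
    have e: "swapc pc d (swapc c1 pc Y1) = swapc c1 d (swapc pc d Y1)" using d False by (simp add: swapc_comm[of pc d c1 pc])
    have "alpha Y1 (swapc pc d Y1)" using fr False d by (intro alpha_fresh_swap) auto
    thus ?thesis unfolding e by (rule alpha_swapc)
  qed
  moreover have "alpha (swapc pc d (swapc c1 pc Y1)) (swapc pc d Z)" using al1 by (rule alpha_swapc)
  ultimately have "alpha (swapc c1 d Y1) (swapc pc d Z)" by (rule alpha.a_trans)
  thus ?thesis using that d by blast
qed

lemma alpha_res_back: "Ch d \<notin> fn Z \<Longrightarrow> alpha (Res d (swapc pc d Z)) (Res pc Z)"
proof -
  assume h: "Ch d \<notin> fn Z"
  have "alpha (Res pc Z) (Res d (swapc pc d Z))"
  proof (cases "d = pc")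
    case True thus ?thesis by (simp add: alpha.a_refl)
  next
    case False thus ?thesis using h by (intro alpha.a_res_rename)
  qed
  thus ?thesis by (rule alpha.a_sym)
qed


lemma simB: "step B a B' \<Longrightarrow> S L A1 B1 \<Longrightarrow> alpha B1 (permc ps B) \<Longrightarrow> NoOutB L B1 \<Longrightarrow>
  CondA L A1 (perma ps a) \<Longrightarrow> abn (perma ps a) \<inter> fn A1 = {} \<Longrightarrow> finite L \<Longrightarrow>
  \<exists>A' A1' B1'. step A1 (perma ps a) A' \<and> alpha A' A1' \<and> S (L - bno (perma ps a)) A1' B1' \<and> alpha B1' (permc ps B')"
proof (induction arbitrary: A1 B1 L ps rule: step.induct)
  case (s_out k l P)
  from s_out.prems(2) obtain q Y1 where B1: "B1 = Pre q Y1" "rebind 0 q = POut (Ch (pch ps k)) (pch ps l)"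
    by (auto elim!: alpha_PreE2)
  from S_PreE2[OF s_out.prems(1)[unfolded B1(1)]] B1 have "A1 = B1" by auto
  thus ?case using reflB[OF s_out.prems(2) step.s_out] by simp
next
  case (s_in l P k x)
  from s_in.prems(2) obtain q Y1 where B1: "B1 = Pre q Y1" "rebind 0 q = PIn (Ch (pch ps k)) 0"
    by (auto elim!: alpha_PreE2)
  have stB: "step (Pre (PIn (Ch k) x) P) (AIn k l) (subst x l P)" using s_in.hyps by (rule step.s_in)
  from S_PreE2[OF s_in.prems(1)[unfolded B1(1)]] show ?case
  proof (elim disjE exE conjE)
    assume "A1 = Pre q Y1" thus ?case using reflB[OF s_in.prems(2) stB] B1 by simp
  next
    fix m y l0 p y' assume A1: "A1 = Msh m y l0 p" and l0: "l0 \<in> L" and B1': "Pre q Y1 = M0sh m y'"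
    have "isM0 m B1" using B1' B1 unfolding isM0_def by auto
    hence "isM0 m (permc ps (Pre (PIn (Ch k) x) P))" using alpha_isM0[OF s_in.prems(2)] by simp
    hence km: "pch ps k = m" and P: "P = PNil" unfolding isM0_def by auto
    have "pch ps l \<noteq> l0" using s_in.prems(4) A1 l0 unfolding CondA_def by auto
    have stA: "step A1 (AIn m (pch ps l)) (Pre (PMatch (Ch (pch ps l)) (Ch l0) (subst_pre y (pch ps l) p)) PNil)"
      unfolding A1 using step.s_in[of "pch ps l" "Pre (PMatch (Var y) (Ch l0) p) PNil" m y] by (simp split: if_splits)
    have "S (L - bno (perma ps (AIn k l))) (Pre (PMatch (Ch (pch ps l)) (Ch l0) (subst_pre y (pch ps l) p)) PNil) PNil"
      using \<open>pch ps l \<noteq> l0\<close> by (simp add: S.S_dead)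
    moreover have "alpha PNil (permc ps (subst x l P))" using P by (simp add: alpha.a_refl)
    ultimately show ?case using stA km by (auto intro: alpha.a_refl)
  qed
next
  case (s_match p P a P' c)
  from s_match.prems(2) obtain q Y1 where B1: "B1 = Pre q Y1" "rebind 0 q = PMatch (pnm ps c) (pnm ps c) (rebind 0 (ppre ps p))"
    by (auto elim!: alpha_PreE2)
  from S_PreE2[OF s_match.prems(1)[unfolded B1(1)]] B1 have "A1 = B1" by auto
  thus ?case using reflB[OF s_match.prems(2) step.s_match[OF s_match.hyps(1)]] by simp
next
  case (s_rep_act P a P')
  from s_rep_act.prems(2) obtain Y1 where "B1 = Bang Y1" by (auto elim!: alpha_BangE2)
  hence "A1 = B1" using S_BangE2 s_rep_act.prems(1) by simp
  thus ?case using reflB[OF s_rep_act.prems(2) step.s_rep_act[OF s_rep_act.hyps(1)]] by simp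
next
  case (s_rep_comm P k l P' P'')
  from s_rep_comm.prems(2) obtain Y1 where "B1 = Bang Y1" by (auto elim!: alpha_BangE2)
  hence "A1 = B1" using S_BangE2 s_rep_comm.prems(1) by simp
  thus ?case using reflB[OF s_rep_comm.prems(2) step.s_rep_comm[OF s_rep_comm.hyps(1,2)]] by simp
next
  case (s_rep_close P k l P' P'')
  from s_rep_close.prems(2) obtain Y1 where "B1 = Bang Y1" by (auto elim!: alpha_BangE2)
  hence "A1 = B1" using S_BangE2 s_rep_close.prems(1) by simp
  thus ?case using reflB[OF s_rep_close.prems(2) step.s_rep_close[OF s_rep_close.hyps(1,2,3)]] by simp
next
  case (s_alpha P P' a Q)
  have "alpha B1 (permc ps P')" using s_alpha.prems(2) alpha_permc[OF s_alpha.hyps(1)] by (rule alpha.a_trans)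
  thus ?case using s_alpha.IH[OF s_alpha.prems(1) _ s_alpha.prems(3-6)] by blast
next
  case (s_res P a P' c)
  define pc where "pc = pch ps c"
  have stB: "step (Res c P) a (Res c P')" using s_res.hyps by (rule step.s_res)
  from s_res.prems(2) obtain c1 Y1 where B1: "B1 = Res c1 Y1" by (auto elim!: alpha_ResE2)
  have pcan: "Ch pc \<notin> an (perma ps a)" unfolding pc_def using s_res.hyps(2) Ch_an_perma by blast
  have fnstep: "fn (permc ps P') \<subseteq> fn (permc ps P) \<union> Ch ` aobj (perma ps a)"
    using step_fn[OF step_permc[OF s_res.hyps(1)]] .
  from S_ResE2[OF s_res.prems(1)[unfolded B1]] show ?case
  proof (elim disjE exE conjE)
    assume "A1 = Res c1 Y1" thus ?case using reflB[OF s_res.prems(2) stB] B1 by simp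
  next
    fix m y l p x Q assume T: "A1 = Tsh (Msh m y l p) c1 l x Q" "Res c1 Y1 = Tsh (M0sh m y) c1 l x Q"
    have "alpha (Tsh (M0sh m y) c1 l x Q) (permc ps (Res c P))" using s_res.prems(2) B1 T(2) by simp
    from TcaseB[OF this step_permc[OF stB], of p L] obtain A' A1' B1' where
      h: "step (Tsh (Msh m y l p) c1 l x Q) (perma ps a) A'" "alpha A' A1'" "S L A1' B1'"
         "alpha B1' (permc ps (Res c P'))" "perma ps a = ATau" by blast
    have "S (L - bno (perma ps a)) A1' B1'" using h(3,5) by simp
    thus ?case using h(1,2,4) T(1) by blast
  next
    fix X1 assume A1: "A1 = Res c1 X1" and S1: "S (L - {c1}) X1 Y1"
    have al0: "alpha (Res c1 Y1) (Res pc (permc ps P))" using s_res.prems(2) B1 pc_def by simp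
    have fin: "finite (L \<union> {e. Ch e \<in> fn X1} \<union> {e. Ch e \<in> an (perma ps a)} \<union> aobj (perma ps a) \<union> {e. Ch e \<in> fn (permc ps P)})"
      using s_res.prems(6) finite_fnc finite_an_set finite_aobj by auto
    obtain d where d: "d \<notin> L \<union> {e. Ch e \<in> fn X1} \<union> {e. Ch e \<in> an (perma ps a)} \<union> aobj (perma ps a) \<union> {e. Ch e \<in> fn (permc ps P)}"
      "d \<noteq> c1" "d \<noteq> pc" "Ch d \<notin> fn Y1" "Ch d \<notin> fn (permc ps P)"
      and al: "alpha (swapc c1 d Y1) (swapc pc d (permc ps P))"
      by (rule renB[OF al0 fin])
    define ps' where "ps' = (pc, d) # ps"
    have pP: "permc ps' P = swapc pc d (permc ps P)" "permc ps' P' = swapc pc d (permc ps P')" by (simp_all add: ps'_def)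
    have pa: "perma ps' a = perma ps a" unfolding ps'_def using pcan d by (simp add: swapa_fresh)
    define L' where "L' = swp c1 d ` (L - {c1})"
    have S2: "S L' (swapc c1 d X1) (swapc c1 d Y1)" unfolding L'_def by (rule S_swapc[OF S1])
    have NO: "NoOutB L' (swapc c1 d Y1)" unfolding L'_def
      using s_res.prems(3) B1 by (intro NoOutB_swapc) (auto simp: NoOutB_def)
    have CA: "CondA L' (swapc c1 d X1) (perma ps' a)" unfolding CondA_def pa
    proof (intro allI impI)
      fix k n assume an: "perma ps a = AIn k n" and nf: "Ch n \<in> fn (swapc c1 d X1)"
      have n1: "n \<noteq> d" using d an by auto
      have n2: "n \<noteq> c1" using nf d by (auto simp: Ch_fn_swapc)
      have "Ch n \<in> fn X1" using nf n1 n2 by (simp add: Ch_fn_swapc)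
      hence "Ch n \<in> fn A1" using A1 n2 by simp
      hence "n \<notin> L" using s_res.prems(4) an unfolding CondA_def by auto
      thus "n \<notin> L'" unfolding L'_def using n1 n2 by simp
    qed
    have AB: "abn (perma ps' a) \<inter> fn (swapc c1 d X1) = {}"
    proof (cases "perma ps a")
      case (ABOut k n)
      have n1: "n \<noteq> d" using d ABOut by auto
      have "Ch n \<notin> fn A1" using s_res.prems(5) ABOut by auto
      hence "Ch (swp c1 d n) \<notin> fn X1" using A1 n1 d by (auto simp: swp_def)
      thus ?thesis using pa ABOut by (simp add: Ch_fn_swapc)
    qed (simp_all add: pa)
    have fL: "finite L'" unfolding L'_def using s_res.prems(6) by simp
    from s_res.IH[OF S2 al[folded pP(1)] NO CA AB fL] obtain A'' A1'' B1'' where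
      IH: "step (swapc c1 d X1) (perma ps a) A''" "alpha A'' A1''" "S (L' - bno (perma ps a)) A1'' B1''" "alpha B1'' (permc ps' P')"
      unfolding pa by blast
    have alA: "alpha A1 (Res d (swapc c1 d X1))" unfolding A1 using d by (intro alpha.a_res_rename) auto
    have stA: "step A1 (perma ps a) (Res d A'')" using alA step.s_res[OF IH(1)] d by (auto intro: step.s_alpha)
    have "S ((L - bno (perma ps a)) - {d}) A1'' B1''"
    proof (rule S_cong[OF IH(3)], intro ballI impI)
      fix l assume l: "l \<in> L' - bno (perma ps a)"
      thus "l \<in> L - bno (perma ps a) - {d}" using d unfolding L'_def by (auto simp: swp_def split: if_splits)
    qed
    hence S3: "S (L - bno (perma ps a)) (Res d A1'') (Res d B1'')" by (rule S.S_res)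
    have "Ch d \<notin> fn (permc ps P')" using fnstep d by auto
    hence "alpha (Res d (swapc pc d (permc ps P'))) (Res pc (permc ps P'))" by (rule alpha_res_back)
    moreover have "alpha (Res d B1'') (Res d (swapc pc d (permc ps P')))" using IH(4) pP by (simp add: alpha.a_res)
    ultimately have "alpha (Res d B1'') (permc ps (Res c P'))" unfolding pc_def by (simp add: alpha.a_trans)
    thus ?case using stA S3 IH(2) by (blast intro: alpha.a_res)
  next
    fix X1 assume A1: "A1 = Res c1 X1" and S1: "S (insert c1 L) X1 Y1" and fo1: "c1 \<notin> fo Y1"
    have al0: "alpha (Res c1 Y1) (Res pc (permc ps P))" using s_res.prems(2) B1 pc_def by simp
    have fin: "finite (L \<union> {e. Ch e \<in> fn X1} \<union> {e. Ch e \<in> an (perma ps a)} \<union> aobj (perma ps a) \<union> {e. Ch e \<in> fn (permc ps P)})"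
      using s_res.prems(6) finite_fnc finite_an_set finite_aobj by auto
    obtain d where d: "d \<notin> L \<union> {e. Ch e \<in> fn X1} \<union> {e. Ch e \<in> an (perma ps a)} \<union> aobj (perma ps a) \<union> {e. Ch e \<in> fn (permc ps P)}"
      "d \<noteq> c1" "d \<noteq> pc" "Ch d \<notin> fn Y1" "Ch d \<notin> fn (permc ps P)"
      and al: "alpha (swapc c1 d Y1) (swapc pc d (permc ps P))"
      by (rule renB[OF al0 fin])
    define ps' where "ps' = (pc, d) # ps"
    have pP: "permc ps' P = swapc pc d (permc ps P)" "permc ps' P' = swapc pc d (permc ps P')" by (simp_all add: ps'_def)
    have pa: "perma ps' a = perma ps a" unfolding ps'_def using pcan d by (simp add: swapa_fresh)
    define L' where "L' = swp c1 d ` (insert c1 L)"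
    have S2: "S L' (swapc c1 d X1) (swapc c1 d Y1)" unfolding L'_def by (rule S_swapc[OF S1])
    have NO: "NoOutB L' (swapc c1 d Y1)" unfolding L'_def
      using s_res.prems(3) B1 fo1 by (intro NoOutB_swapc) (auto simp: NoOutB_def)
    have CA: "CondA L' (swapc c1 d X1) (perma ps' a)" unfolding CondA_def pa
    proof (intro allI impI)
      fix k n assume an: "perma ps a = AIn k n" and nf: "Ch n \<in> fn (swapc c1 d X1)"
      have n1: "n \<noteq> d" using d an by auto
      have n2: "n \<noteq> c1" using nf d by (auto simp: Ch_fn_swapc)
      have "Ch n \<in> fn X1" using nf n1 n2 by (simp add: Ch_fn_swapc)
      hence "Ch n \<in> fn A1" using A1 n2 by simp
      hence "n \<notin> L" using s_res.prems(4) an unfolding CondA_def by auto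
      thus "n \<notin> L'" unfolding L'_def using n1 n2 by simp
    qed
    have AB: "abn (perma ps' a) \<inter> fn (swapc c1 d X1) = {}"
    proof (cases "perma ps a")
      case (ABOut k n)
      have n1: "n \<noteq> d" using d ABOut by auto
      have "Ch n \<notin> fn A1" using s_res.prems(5) ABOut by auto
      hence "Ch (swp c1 d n) \<notin> fn X1" using A1 n1 d by (auto simp: swp_def)
      thus ?thesis using pa ABOut by (simp add: Ch_fn_swapc)
    qed (simp_all add: pa)
    have fL: "finite L'" unfolding L'_def using s_res.prems(6) by simp
    from s_res.IH[OF S2 al[folded pP(1)] NO CA AB fL] obtain A'' A1'' B1'' where
      IH: "step (swapc c1 d X1) (perma ps a) A''" "alpha A'' A1''" "S (L' - bno (perma ps a)) A1'' B1''" "alpha B1'' (permc ps' P')"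
      unfolding pa by blast
    have alA: "alpha A1 (Res d (swapc c1 d X1))" unfolding A1 using d by (intro alpha.a_res_rename) auto
    have stA: "step A1 (perma ps a) (Res d A'')" using alA step.s_res[OF IH(1)] d by (auto intro: step.s_alpha)
    have "S (insert d (L - bno (perma ps a))) A1'' B1''"
    proof (rule S_cong[OF IH(3)], intro ballI impI)
      fix l assume l: "l \<in> L' - bno (perma ps a)"
      thus "l \<in> insert d (L - bno (perma ps a))" using d unfolding L'_def by (auto simp: swp_def split: if_splits)
    qed
    moreover have "d \<notin> fo B1''"
    proof
      assume "d \<in> fo B1''"
      hence "d \<in> fo (permc ps' P')" using alpha_fo[OF IH(4)] by simp
      moreover have "fo (permc ps' P') \<subseteq> fo (permc ps' P) \<union> aobj (perma ps a)"
        using step_fo[OF step_permc[OF s_res.hyps(1), of ps']] pa by simp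
      moreover have "fo (permc ps' P) = fo (swapc c1 d Y1)" using alpha_fo[OF al[folded pP(1)]] by simp
      ultimately have "d \<in> fo (swapc c1 d Y1)" using d by auto
      thus False using fo1 by (simp add: mem_fo_swapc)
    qed
    ultimately have S3: "S (L - bno (perma ps a)) (Res d A1'') (Res d B1'')" by (rule S.S_prot)
    have "Ch d \<notin> fn (permc ps P')" using fnstep d by auto
    hence "alpha (Res d (swapc pc d (permc ps P'))) (Res pc (permc ps P'))" by (rule alpha_res_back)
    moreover have "alpha (Res d B1'') (Res d (swapc pc d (permc ps P')))" using IH(4) pP by (simp add: alpha.a_res)
    ultimately have "alpha (Res d B1'') (permc ps (Res c P'))" unfolding pc_def by (simp add: alpha.a_trans)
    thus ?case using stA S3 IH(2) by (blast intro: alpha.a_res)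
  qed
next
  case (s_open P k c Q)
  define pc where "pc = pch ps c"
  define pk where "pk = pch ps k"
  have stB: "step (Res c P) (ABOut k c) Q" using s_open.hyps by (rule step.s_open)
  from s_open.prems(2) obtain c1 Y1 where B1: "B1 = Res c1 Y1" by (auto elim!: alpha_ResE2)
  have al0: "alpha (Res c1 Y1) (Res pc (permc ps P))" using s_open.prems(2) B1 pc_def by simp
  hence fr: "pc = c1 \<or> Ch pc \<notin> fn Y1" and al1: "alpha (swapc c1 pc Y1) (permc ps P)" by (simp_all add: alpha_Res_iff)
  have stP: "step (permc ps P) (AOut pk pc) (permc ps Q)" using step_permc[OF s_open.hyps(1)] pk_def pc_def by simp
  from S_ResE2[OF s_open.prems(1)[unfolded B1]] show ?case
  proof (elim disjE exE conjE)
    assume "A1 = Res c1 Y1" thus ?case using reflB[OF s_open.prems(2) stB] B1 by simp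
  next
    fix m y l p x Q0 assume T: "A1 = Tsh (Msh m y l p) c1 l x Q0" "Res c1 Y1 = Tsh (M0sh m y) c1 l x Q0"
    have "alpha (Tsh (M0sh m y) c1 l x Q0) (permc ps (Res c P))" using s_open.prems(2) B1 T(2) by simp
    from TcaseB[OF this step_permc[OF stB], of p L] show ?case by auto
  next
    fix X1 assume A1: "A1 = Res c1 X1" and S1: "S (L - {c1}) X1 Y1"
    have frA: "pc = c1 \<or> Ch pc \<notin> fn X1" using s_open.prems(5) A1 pc_def by auto
    define L' where "L' = swp c1 pc ` (L - {c1})"
    have S2: "S L' (swapc c1 pc X1) (swapc c1 pc Y1)" unfolding L'_def by (rule S_swapc[OF S1])
    have NO: "NoOutB L' (swapc c1 pc Y1)" unfolding L'_def
      using s_open.prems(3) B1 by (intro NoOutB_swapc) (auto simp: NoOutB_def)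
    have fL: "finite L'" unfolding L'_def using s_open.prems(6) by simp
    from s_open.IH[OF S2 al1 NO _ _ fL] obtain A'' A1'' B1'' where
      IH: "step (swapc c1 pc X1) (AOut pk pc) A''" "alpha A'' A1''" "S L' A1'' B1''" "alpha B1'' (permc ps Q)"
      unfolding pk_def pc_def by (auto simp: CondA_def)
    have alA: "alpha A1 (Res pc (swapc c1 pc X1))"
    proof (cases "pc = c1")
      case True thus ?thesis using A1 by (simp add: alpha.a_refl)
    next
      case False thus ?thesis using A1 frA by (auto intro: alpha.a_res_rename)
    qed
    have "pk \<noteq> pc" using s_open.hyps(2) pk_def pc_def by simp
    hence stA: "step A1 (ABOut pk pc) A''" using alA step.s_open[OF IH(1)] by (auto intro: step.s_alpha)
    have fnA: "fn A1'' \<subseteq> fn (swapc c1 pc X1) \<union> {Ch pc}" using alpha_fn[OF IH(2)] step_fn[OF IH(1)] by simp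
    have "S (L - {pc}) A1'' B1''"
    proof (rule S_cong[OF IH(3)], intro ballI impI)
      fix l assume l: "l \<in> L'" and lf: "Ch l \<in> fn A1''"
      have "l \<noteq> c1 \<or> c1 = pc"
      proof (rule ccontr)
        assume "\<not> (l \<noteq> c1 \<or> c1 = pc)"
        hence "l = c1" "c1 \<noteq> pc" by auto
        hence "Ch c1 \<in> fn (swapc c1 pc X1)" using lf fnA by auto
        hence "Ch pc \<in> fn X1" by (simp add: Ch_fn_swapc)
        thus False using frA \<open>c1 \<noteq> pc\<close> by auto
      qed
      thus "l \<in> L - {pc}" using l unfolding L'_def by (auto simp: swp_def split: if_splits)
    qed
    thus ?case using stA IH(2,4) pk_def pc_def by auto
  next
    fix X1 assume A1: "A1 = Res c1 X1" and S1: "S (insert c1 L) X1 Y1" and fo1: "c1 \<notin> fo Y1"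
    have "pc \<in> fo (permc ps P)" using step_out_fo[OF stP refl] .
    hence "pc \<in> fo (swapc c1 pc Y1)" using alpha_fo[OF al1] by simp
    thus ?case using fo1 by (simp add: mem_fo_swapc)
  qed
next
  case (s_par_l P a Q R)
  from s_par_l.prems(2) obtain Y1 W1 where B1: "B1 = Par Y1 W1" "alpha Y1 (permc ps P)" "alpha W1 (permc ps R)"
    by (auto elim!: alpha_ParE2)
  have stB: "step (Par P R) a (Par Q R)" using s_par_l.hyps by (rule step.s_par_l)
  from S_ParE2[OF s_par_l.prems(1)[unfolded B1(1)]] show ?case
  proof (elim disjE exE conjE)
    assume "A1 = Par Y1 W1" thus ?case using reflB[OF s_par_l.prems(2) stB] B1 by simp
  next
    fix X1 Z1 assume A1: "A1 = Par X1 Z1" and S1: "S L X1 Y1" and S2: "S L Z1 W1"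
    have NO: "NoOutB L Y1" using s_par_l.prems(3) B1 NoOutB_Par by blast
    have CA: "CondA L X1 (perma ps a)" using s_par_l.prems(4) A1 CondA_Par by blast
    have AB: "abn (perma ps a) \<inter> fn X1 = {}" using s_par_l.prems(5) A1 by auto
    from s_par_l.IH[OF S1 B1(2) NO CA AB s_par_l.prems(6)] obtain A'' A1'' B1'' where
      IH: "step X1 (perma ps a) A''" "alpha A'' A1''" "S (L - bno (perma ps a)) A1'' B1''" "alpha B1'' (permc ps Q)"
      by blast
    have stA: "step A1 (perma ps a) (Par A'' Z1)" unfolding A1 using IH(1) s_par_l.prems(5) A1
      by (intro step.s_par_l) auto
    have "S (L - bno (perma ps a)) Z1 W1"
    proof (rule S_cong[OF S2], intro ballI impI)
      fix l assume "l \<in> L" "Ch l \<in> fn Z1"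
      thus "l \<in> L - bno (perma ps a)" using s_par_l.prems(5) A1 bno_abn by fastforce
    qed
    hence "S (L - bno (perma ps a)) (Par A1'' Z1) (Par B1'' W1)" using IH(3) by (rule S.S_par[rotated])
    moreover have "alpha (Par A'' Z1) (Par A1'' Z1)" using IH(2) by (simp add: alpha_Par_iff alpha.a_refl)
    moreover have "alpha (Par B1'' W1) (permc ps (Par Q R))" using IH(4) B1(3) by (simp add: alpha_Par_iff)
    ultimately show ?case using stA by blast
  qed
next
  case (s_par_r P a Q R)
  from s_par_r.prems(2) obtain W1 Y1 where B1: "B1 = Par W1 Y1" "alpha Y1 (permc ps P)" "alpha W1 (permc ps R)"
    by (auto elim!: alpha_ParE2)
  have stB: "step (Par R P) a (Par R Q)" using s_par_r.hyps by (rule step.s_par_r)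
  from S_ParE2[OF s_par_r.prems(1)[unfolded B1(1)]] show ?case
  proof (elim disjE exE conjE)
    assume "A1 = Par W1 Y1" thus ?case using reflB[OF s_par_r.prems(2) stB] B1 by simp
  next
    fix Z1 X1 assume A1: "A1 = Par Z1 X1" and S2: "S L Z1 W1" and S1: "S L X1 Y1"
    have NO: "NoOutB L Y1" using s_par_r.prems(3) B1 NoOutB_Par by blast
    have CA: "CondA L X1 (perma ps a)" using s_par_r.prems(4) A1 CondA_Par by blast
    have AB: "abn (perma ps a) \<inter> fn X1 = {}" using s_par_r.prems(5) A1 by auto
    from s_par_r.IH[OF S1 B1(2) NO CA AB s_par_r.prems(6)] obtain A'' A1'' B1'' where
      IH: "step X1 (perma ps a) A''" "alpha A'' A1''" "S (L - bno (perma ps a)) A1'' B1''" "alpha B1'' (permc ps Q)"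
      by blast
    have stA: "step A1 (perma ps a) (Par Z1 A'')" unfolding A1 using IH(1) s_par_r.prems(5) A1
      by (intro step.s_par_r) auto
    have "S (L - bno (perma ps a)) Z1 W1"
    proof (rule S_cong[OF S2], intro ballI impI)
      fix l assume "l \<in> L" "Ch l \<in> fn Z1"
      thus "l \<in> L - bno (perma ps a)" using s_par_r.prems(5) A1 bno_abn by fastforce
    qed
    hence "S (L - bno (perma ps a)) (Par Z1 A1'') (Par W1 B1'')" using IH(3) by (rule S.S_par)
    moreover have "alpha (Par Z1 A'') (Par Z1 A1'')" using IH(2) by (simp add: alpha_Par_iff alpha.a_refl)
    moreover have "alpha (Par W1 B1'') (permc ps (Par R Q))" using IH(4) B1(3) by (simp add: alpha_Par_iff)
    ultimately show ?case using stA by blast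
  qed
next
  case (s_comm_l P k l P' Q Q')
  from s_comm_l.prems(2) obtain Y1 W1 where B1: "B1 = Par Y1 W1" "alpha Y1 (permc ps P)" "alpha W1 (permc ps Q)"
    by (auto elim!: alpha_ParE2)
  have stB: "step (Par P Q) ATau (Par P' Q')" using s_comm_l.hyps by (rule step.s_comm_l)
  from S_ParE2[OF s_comm_l.prems(1)[unfolded B1(1)]] show ?case
  proof (elim disjE exE conjE)
    assume "A1 = Par Y1 W1" thus ?case using reflB[OF s_comm_l.prems(2) stB] B1 by simp
  next
    fix X1 Z1 assume A1: "A1 = Par X1 Z1" and S1: "S L X1 Y1" and S2: "S L Z1 W1"
    have NO1: "NoOutB L Y1" and NO2: "NoOutB L W1" using s_comm_l.prems(3) B1 NoOutB_Par by blast+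
    from s_comm_l.IH(1)[OF S1 B1(2) NO1 _ _ s_comm_l.prems(6)] obtain A1x A1x' B1x' where
      IH1: "step X1 (AOut (pch ps k) (pch ps l)) A1x" "alpha A1x A1x'" "S L A1x' B1x'" "alpha B1x' (permc ps P')"
      by (auto simp: CondA_def)
    have "pch ps l \<in> fo (permc ps P)" using step_out_fo[OF step_permc[OF s_comm_l.hyps(1)]] by simp
    hence "pch ps l \<notin> L" using NO1 alpha_fo[OF B1(2)] unfolding NoOutB_def by auto
    hence CA: "CondA L Z1 (perma ps (AIn k l))" unfolding CondA_def by auto
    from s_comm_l.IH(2)[OF S2 B1(3) NO2 CA _ s_comm_l.prems(6)] obtain A2x A2x' B2x' where
      IH2: "step Z1 (AIn (pch ps k) (pch ps l)) A2x" "alpha A2x A2x'" "S L A2x' B2x'" "alpha B2x' (permc ps Q')"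
      by auto
    have stA: "step A1 ATau (Par A1x A2x)" unfolding A1 using IH1(1) IH2(1) by (rule step.s_comm_l)
    have "S (L - bno (perma ps ATau)) (Par A1x' A2x') (Par B1x' B2x')" using IH1(3) IH2(3) by (simp add: S.S_par)
    moreover have "alpha (Par A1x A2x) (Par A1x' A2x')" using IH1(2) IH2(2) by (simp add: alpha_Par_iff)
    moreover have "alpha (Par B1x' B2x') (permc ps (Par P' Q'))" using IH1(4) IH2(4) by (simp add: alpha_Par_iff)
    ultimately show ?case using stA by auto
  qed
next
  case (s_comm_r P k l P' Q Q')
  from s_comm_r.prems(2) obtain W1 Y1 where B1: "B1 = Par W1 Y1" "alpha Y1 (permc ps P)" "alpha W1 (permc ps Q)"
    by (auto elim!: alpha_ParE2)
  have stB: "step (Par Q P) ATau (Par Q' P')" using s_comm_r.hyps by (rule step.s_comm_r)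
  from S_ParE2[OF s_comm_r.prems(1)[unfolded B1(1)]] show ?case
  proof (elim disjE exE conjE)
    assume "A1 = Par W1 Y1" thus ?case using reflB[OF s_comm_r.prems(2) stB] B1 by simp
  next
    fix Z1 X1 assume A1: "A1 = Par Z1 X1" and S2: "S L Z1 W1" and S1: "S L X1 Y1"
    have NO1: "NoOutB L Y1" and NO2: "NoOutB L W1" using s_comm_r.prems(3) B1 NoOutB_Par by blast+
    from s_comm_r.IH(1)[OF S1 B1(2) NO1 _ _ s_comm_r.prems(6)] obtain A1x A1x' B1x' where
      IH1: "step X1 (AOut (pch ps k) (pch ps l)) A1x" "alpha A1x A1x'" "S L A1x' B1x'" "alpha B1x' (permc ps P')"
      by (auto simp: CondA_def)
    have "pch ps l \<in> fo (permc ps P)" using step_out_fo[OF step_permc[OF s_comm_r.hyps(1)]] by simp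
    hence "pch ps l \<notin> L" using NO1 alpha_fo[OF B1(2)] unfolding NoOutB_def by auto
    hence CA: "CondA L Z1 (perma ps (AIn k l))" unfolding CondA_def by auto
    from s_comm_r.IH(2)[OF S2 B1(3) NO2 CA _ s_comm_r.prems(6)] obtain A2x A2x' B2x' where
      IH2: "step Z1 (AIn (pch ps k) (pch ps l)) A2x" "alpha A2x A2x'" "S L A2x' B2x'" "alpha B2x' (permc ps Q')"
      by auto
    have stA: "step A1 ATau (Par A2x A1x)" unfolding A1 using IH1(1) IH2(1) by (rule step.s_comm_r)
    have "S (L - bno (perma ps ATau)) (Par A2x' A1x') (Par B2x' B1x')" using IH1(3) IH2(3) by (simp add: S.S_par)
    moreover have "alpha (Par A2x A1x) (Par A2x' A1x')" using IH1(2) IH2(2) by (simp add: alpha_Par_iff)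
    moreover have "alpha (Par B2x' B1x') (permc ps (Par Q' P'))" using IH1(4) IH2(4) by (simp add: alpha_Par_iff)
    ultimately show ?case using stA by auto
  qed
next
  case (s_close_l P k l P' Q Q')
  from s_close_l.prems(2) obtain Y1 W1 where B1: "B1 = Par Y1 W1" "alpha Y1 (permc ps P)" "alpha W1 (permc ps Q)"
    by (auto elim!: alpha_ParE2)
  have stB: "step (Par P Q) ATau (Res l (Par P' Q'))" using s_close_l.hyps by (rule step.s_close_l)
  from step_bout[OF s_close_l.hyps(1) refl] have kl: "Ch l \<notin> fn P" "k \<noteq> l" by auto
  define pk where "pk = pch ps k"
  define pl where "pl = pch ps l"
  from S_ParE2[OF s_close_l.prems(1)[unfolded B1(1)]] show ?case
  proof (elim disjE exE conjE)
    assume "A1 = Par Y1 W1" thus ?case using reflB[OF s_close_l.prems(2) stB] B1 by simp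
  next
    fix X1 Z1 assume A1: "A1 = Par X1 Z1" and S1: "S L X1 Y1" and S2: "S L Z1 W1"
    have NO1: "NoOutB L Y1" and NO2: "NoOutB L W1" using s_close_l.prems(3) B1 NoOutB_Par by blast+
    define F where "F = L \<union> {c. Ch c \<in> fn A1} \<union> {c. Ch c \<in> fn (permc ps P)} \<union> {c. Ch c \<in> fn (permc ps Q)}
       \<union> {c. Ch c \<in> fn (permc ps P')} \<union> {c. Ch c \<in> fn (permc ps Q')} \<union> {pk, pl}"
    have "finite F" unfolding F_def using s_close_l.prems(6) finite_fnc by auto
    then obtain e where e: "e \<notin> F" using fresh_nat by blast
    define ps' where "ps' = (pl, e) # ps"
    have pkl: "pk \<noteq> pl" using kl pk_def pl_def by simp
    have pa1: "perma ps' (ABOut k l) = ABOut pk e" "perma ps' (AIn k l) = AIn pk e"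
      unfolding ps'_def pk_def pl_def using e pkl unfolding F_def pk_def pl_def by auto
    have pP: "permc ps' P = swapc pl e (permc ps P)" "permc ps' Q = swapc pl e (permc ps Q)"
      "permc ps' P' = swapc pl e (permc ps P')" "permc ps' Q' = swapc pl e (permc ps Q')" by (simp_all add: ps'_def)
    have "alpha (permc ps P) (swapc pl e (permc ps P))"
      using kl e unfolding pl_def F_def by (intro alpha_fresh_swap) (auto simp: Ch_fn_permc)
    hence alY: "alpha Y1 (permc ps' P)" using B1(2) pP by (metis alpha.a_trans)
    have "alpha (permc ps Q) (swapc pl e (permc ps Q))"
      using s_close_l.hyps(3) e unfolding pl_def F_def by (intro alpha_fresh_swap) (auto simp: Ch_fn_permc)
    hence alW: "alpha W1 (permc ps' Q)" using B1(3) pP by (metis alpha.a_trans)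
    have eA: "Ch e \<notin> fn X1" "Ch e \<notin> fn Z1" using e A1 unfolding F_def by auto
    from s_close_l.IH(1)[OF S1 alY NO1 _ _ s_close_l.prems(6), unfolded pa1] eA obtain A1x A1x' B1x' where
      IH1: "step X1 (ABOut pk e) A1x" "alpha A1x A1x'" "S (L - {e}) A1x' B1x'" "alpha B1x' (permc ps' P')"
      by auto
    have CA: "CondA L Z1 (AIn pk e)" unfolding CondA_def using eA by auto
    from s_close_l.IH(2)[OF S2 alW NO2 _ _ s_close_l.prems(6), unfolded pa1] CA obtain A2x A2x' B2x' where
      IH2: "step Z1 (AIn pk e) A2x" "alpha A2x A2x'" "S L A2x' B2x'" "alpha B2x' (permc ps' Q')"
      by auto
    have eL: "e \<notin> L" using e unfolding F_def by auto
    have IH2': "S (L - {e}) A2x' B2x'" using IH2(3) eL by simp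
    have stA: "step A1 ATau (Res e (Par A1x A2x))" unfolding A1 using IH1(1) IH2(1) eA(2) by (rule step.s_close_l)
    have S3: "S (L - bno (perma ps ATau)) (Res e (Par A1x' A2x')) (Res e (Par B1x' B2x'))"
      using IH1(3) IH2' by (auto intro!: S.S_res S.S_par)
    have al1: "alpha (Res e (Par A1x A2x)) (Res e (Par A1x' A2x'))" using IH1(2) IH2(2) by (simp add: alpha_Par_iff alpha.a_res)
    have "Ch e \<notin> fn (Par (permc ps P') (permc ps Q'))" using e unfolding F_def by auto
    hence "alpha (Res e (swapc pl e (Par (permc ps P') (permc ps Q')))) (Res pl (Par (permc ps P') (permc ps Q')))" by (rule alpha_res_back)
    moreover have "alpha (Res e (Par B1x' B2x')) (Res e (swapc pl e (Par (permc ps P') (permc ps Q'))))" using IH1(4) IH2(4) pP by (simp add: alpha_Par_iff alpha.a_res)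
    ultimately have "alpha (Res e (Par B1x' B2x')) (permc ps (Res l (Par P' Q')))"
      unfolding pl_def by (simp add: alpha.a_trans)
    thus ?case using stA S3 al1 by auto
  qed
next
  case (s_close_r P k l P' Q Q')
  from s_close_r.prems(2) obtain W1 Y1 where B1: "B1 = Par W1 Y1" "alpha Y1 (permc ps P)" "alpha W1 (permc ps Q)"
    by (auto elim!: alpha_ParE2)
  have stB: "step (Par Q P) ATau (Res l (Par Q' P'))" using s_close_r.hyps by (rule step.s_close_r)
  from step_bout[OF s_close_r.hyps(1) refl] have kl: "Ch l \<notin> fn P" "k \<noteq> l" by auto
  define pk where "pk = pch ps k"
  define pl where "pl = pch ps l"
  from S_ParE2[OF s_close_r.prems(1)[unfolded B1(1)]] show ?case
  proof (elim disjE exE conjE)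
    assume "A1 = Par W1 Y1" thus ?case using reflB[OF s_close_r.prems(2) stB] B1 by simp
  next
    fix Z1 X1 assume A1: "A1 = Par Z1 X1" and S2: "S L Z1 W1" and S1: "S L X1 Y1"
    have NO1: "NoOutB L Y1" and NO2: "NoOutB L W1" using s_close_r.prems(3) B1 NoOutB_Par by blast+
    define F where "F = L \<union> {c. Ch c \<in> fn A1} \<union> {c. Ch c \<in> fn (permc ps P)} \<union> {c. Ch c \<in> fn (permc ps Q)}
       \<union> {c. Ch c \<in> fn (permc ps P')} \<union> {c. Ch c \<in> fn (permc ps Q')} \<union> {pk, pl}"
    have "finite F" unfolding F_def using s_close_r.prems(6) finite_fnc by auto
    then obtain e where e: "e \<notin> F" using fresh_nat by blast
    define ps' where "ps' = (pl, e) # ps"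
    have pkl: "pk \<noteq> pl" using kl pk_def pl_def by simp
    have pa1: "perma ps' (ABOut k l) = ABOut pk e" "perma ps' (AIn k l) = AIn pk e"
      unfolding ps'_def pk_def pl_def using e pkl unfolding F_def pk_def pl_def by auto
    have pP: "permc ps' P = swapc pl e (permc ps P)" "permc ps' Q = swapc pl e (permc ps Q)"
      "permc ps' P' = swapc pl e (permc ps P')" "permc ps' Q' = swapc pl e (permc ps Q')" by (simp_all add: ps'_def)
    have "alpha (permc ps P) (swapc pl e (permc ps P))"
      using kl e unfolding pl_def F_def by (intro alpha_fresh_swap) (auto simp: Ch_fn_permc)
    hence alY: "alpha Y1 (permc ps' P)" using B1(2) pP by (metis alpha.a_trans)
    have "alpha (permc ps Q) (swapc pl e (permc ps Q))"
      using s_close_r.hyps(3) e unfolding pl_def F_def by (intro alpha_fresh_swap) (auto simp: Ch_fn_permc)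
    hence alW: "alpha W1 (permc ps' Q)" using B1(3) pP by (metis alpha.a_trans)
    have eA: "Ch e \<notin> fn X1" "Ch e \<notin> fn Z1" using e A1 unfolding F_def by auto
    from s_close_r.IH(1)[OF S1 alY NO1 _ _ s_close_r.prems(6), unfolded pa1] eA obtain A1x A1x' B1x' where
      IH1: "step X1 (ABOut pk e) A1x" "alpha A1x A1x'" "S (L - {e}) A1x' B1x'" "alpha B1x' (permc ps' P')"
      by auto
    have CA: "CondA L Z1 (AIn pk e)" unfolding CondA_def using eA by auto
    from s_close_r.IH(2)[OF S2 alW NO2 _ _ s_close_r.prems(6), unfolded pa1] CA obtain A2x A2x' B2x' where
      IH2: "step Z1 (AIn pk e) A2x" "alpha A2x A2x'" "S L A2x' B2x'" "alpha B2x' (permc ps' Q')"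
      by auto
    have eL: "e \<notin> L" using e unfolding F_def by auto
    have IH2': "S (L - {e}) A2x' B2x'" using IH2(3) eL by simp
    have stA: "step A1 ATau (Res e (Par A2x A1x))" unfolding A1 using IH1(1) IH2(1) eA(2) by (rule step.s_close_r)
    have S3: "S (L - bno (perma ps ATau)) (Res e (Par A2x' A1x')) (Res e (Par B2x' B1x'))"
      using IH1(3) IH2' by (auto intro!: S.S_res S.S_par)
    have al1: "alpha (Res e (Par A2x A1x)) (Res e (Par A2x' A1x'))" using IH1(2) IH2(2) by (simp add: alpha_Par_iff alpha.a_res)
    have "Ch e \<notin> fn (Par (permc ps Q') (permc ps P'))" using e unfolding F_def by auto
    hence "alpha (Res e (swapc pl e (Par (permc ps Q') (permc ps P')))) (Res pl (Par (permc ps Q') (permc ps P')))" by (rule alpha_res_back)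
    moreover have "alpha (Res e (Par B2x' B1x')) (Res e (swapc pl e (Par (permc ps Q') (permc ps P'))))" using IH1(4) IH2(4) pP by (simp add: alpha_Par_iff alpha.a_res)
    ultimately have "alpha (Res e (Par B2x' B1x')) (permc ps (Res l (Par Q' P')))"
      unfolding pl_def by (simp add: alpha.a_trans)
    thus ?case using stA S3 al1 by auto
  qed
qed


definition RR :: "(proc \<times> proc) set" where
  "RR = {(A, B). \<exists>A1 B1. alpha A A1 \<and> S {} A1 B1 \<and> alpha B1 B} \<union>
        {(B, A). \<exists>A1 B1. alpha A A1 \<and> S {} A1 B1 \<and> alpha B1 B}"

lemma RR_bisim: "is_bisim RR"
  unfolding is_bisim_def
proof (intro conjI allI impI)
  show "sym RR" unfolding RR_def sym_def by blast
next
  fix P Q a P' assume PQ: "(P, Q) \<in> RR" and st: "step P a P' \<and> abn a \<inter> fn Q = {}"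
  from PQ consider (l) A1 B1 where "alpha P A1" "S {} A1 B1" "alpha B1 Q"
    | (r) A1 B1 where "alpha Q A1" "S {} A1 B1" "alpha B1 P"
    unfolding RR_def by blast
  thus "\<exists>Q'. step Q a Q' \<and> (P', Q') \<in> RR"
  proof cases
    case l
    from simA[OF conjunct1[OF st] alpha.a_sym[OF l(1)] l(2)] obtain B' A1' B1' where
      h: "step B1 a B'" "alpha P' A1'" "S ({} - bno a) A1' B1'" "alpha B1' B'"
      by (auto simp: NoOutB_def CondA_def)
    have "step Q a B'" using alpha.a_sym[OF l(3)] h(1) by (rule step.s_alpha)
    moreover have "(P', B') \<in> RR" unfolding RR_def using h by auto
    ultimately show ?thesis by blast
  next
    case r
    have ab: "abn (perma [] a) \<inter> fn A1 = {}" using st alpha_fn[OF r(1)] by simp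
    from simB[OF conjunct1[OF st] r(2) _ _ _ ab] r(3) obtain A' A1' B1' where
      h: "step A1 a A'" "alpha A' A1'" "S ({} - bno a) A1' B1'" "alpha B1' P'"
      by (auto simp: NoOutB_def CondA_def)
    have "step Q a A'" using r(1) h(1) by (rule step.s_alpha)
    moreover have "(P', A') \<in> RR" unfolding RR_def using h by auto
    ultimately show ?thesis by blast
  qed
qed

theorem proposition1:
  fixes P :: proc and m k l :: chan and p :: prefix and x y :: var
  shows "Res k (Par (Res l (Pre (POut (Ch k) l) (Pre (PIn (Ch m) y) (Pre (PMatch (Var y) (Ch l) p) PNil))))
                    (Pre (PIn (Ch k) x) P))
         \<sim>\<^sub>s
         Res k (Par (Res l (Pre (POut (Ch k) l) (Pre (PIn (Ch m) y) PNil)))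
                    (Pre (PIn (Ch k) x) P))"
proof -
  have "(Tsh (Msh m y l p) k l x P, Tsh (M0sh m y) k l x P) \<in> RR"
    unfolding RR_def by (blast intro: alpha.a_refl S.S_T)
  thus ?thesis unfolding bisimilar_def using RR_bisim by blast
qed


end
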